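(* The labelled transition system of CPC is structurally image finite: for every CPC process $P$ and every label $\mu$, the set $\{P' : P\xrightarrow{\mu}P'\}$ contains only finitely many equivalence classes with respect to structural congruence $\equiv$.
   Context: Concurrent pattern calculus (CPC). Fix a countable set $\mathcal N$ of names. Patterns are $p ::= \lambda x \mid x \mid \ulcorner x\urcorner \mid p\bullet p$ (binding name, variable name, protected name, compound; $\bullet$ is left associative). ${\sf bn}(p)$, ${\sf vn}(p)$, ${\sf pn}(p)$ denote the sets of names occurring in $p$ as binding, variable and protected names, and ${\sf fn}(p)={\sf vn}(p)\cup{\sf pn}(p)$. A pattern is well formed if its binding names are pairwise distinct and distinct from its free names; all patterns are assumed well formed. A pattern is communicable if it contains no protected and no binding names; protection extends to communicable patterns by $\ulcorner p\bullet q\urcorner=\ulcorner p\urcorner\bullet\ulcorner q\urcorner$. A substitution is a partial function with finite domain from names to communicable patterns. On patterns: $\sigma x=\sigma(x)$ if $x\in{\sf dom}(\sigma)$ else $x$; $\sigma\ulcorner x\urcorner=\ulcorner\sigma(x)\urcorner$ if $x\in{\sf dom}(\sigma)$ else $\ulcorner x\urcorner$; $\sigma(\lambda x)=\lambda x$; $\sigma(p\bullet q)=\sigma p\bullet\sigma q$. Unification $\{p\,\|\,q\}$ is a pair of substitutions or undefined: $\{x\|x\}=\{x\|\ulcorner x\urcorner\}=\{\ulcorner x\urcorner\|x\}=\{\ulcorner x\urcorner\|\ulcorner x\urcorner\}=(\{\},\{\})$; $\{\lambda x\|q\}=(\{q/x\},\{\})$ if $q$ is communicable; $\{p\|\lambda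 x\}=(\{\},\{p/x\})$ if $p$ is communicable; $\{p_1\bullet p_2\|q_1\bullet q_2\}=(\sigma_1\cup\sigma_2,\rho_1\cup\rho_2)$ if $\{p_i\|q_i\}=(\sigma_i,\rho_i)$ for $i=1,2$; undefined otherwise. Processes: $P ::= 0 \mid P|P \mid\ !P \mid (\nu x)P \mid p\to P$ (the binding names of $p$ bind in $P$; ${\sf fn}(p\to P)={\sf fn}(p)\cup({\sf fn}(P)\setminus{\sf bn}(p))$; other free names as usual). Substitution on processes is capture avoiding (up to $\alpha$-conversion). Structural congruence $\equiv$ is the least congruence containing $\alpha$-conversion and $P|0\equiv P$, $P|Q\equiv Q|P$, $P|(Q|R)\equiv(P|Q)|R$, $(\nu n)0\equiv 0$, $(\nu n)(\nu m)P\equiv(\nu m)(\nu n)P$, $!P\equiv P|!P$, $P|(\nu n)Q\equiv(\nu n)(P|Q)$ if $n\notin{\sf fn}(P)$. Labelled transitions: labels $\mu::=\tau\mid(\nu\tilde n)p$. Rules (up to $\alpha$-conversion; parint and parext also have symmetric versions): case: $p\to P\xrightarrow{p}P$; resnon: $P\xrightarrow{\mu}P'$ implies $(\nu n)P\xrightarrow{\mu}(\nu n)P'$ if $n$ does not occur in $\mu$; open: $P\xrightarrow{(\nu\tilde n)p}P'$ implies $(\nu m)P\xrightarrow{(\nu\tilde n,m)p}P'$ if $m\in{\sf vn}(p)\setminus(\tilde n\cup{\sf pn}(p)\cup{\sf bn}(p))$; unify: $P\xrightarrow{(\nu\tilde m)p}P'$ and $Q\xrightarrow{(\nu\tilde n)q}Q'$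 imply $P|Q\xrightarrow{\tau}(\nu\tilde m\tilde n)(\sigma P'|\rho Q')$ if $\{p\|q\}=(\sigma,\rho)$, $\tilde m\cap{\sf fn}(Q)=\tilde n\cap{\sf fn}(P)=\tilde m\cap\tilde n=\emptyset$; parint: $P\xrightarrow{\tau}P'$ implies $P|Q\xrightarrow{\tau}P'|Q$; parext: $P\xrightarrow{(\nu\tilde n)p}P'$ implies $P|Q\xrightarrow{(\nu\tilde n)p}P'|Q$ if $(\tilde n\cup{\sf bn}(p))\cap{\sf fn}(Q)=\emptyset$; rep: $!P|P\xrightarrow{\mu}P'$ implies $!P\xrightarrow{\mu}P'$. *)

theory Defs
  imports Main
begin

type_synonym name = nat

datatype pat = PBind name | PVar name | PProt name | PComp pat pat

fun bn_list :: "pat \<Rightarrow> name list" where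
  "bn_list (PBind x) = [x]"
| "bn_list (PVar x) = []"
| "bn_list (PProt x) = []"
| "bn_list (PComp p q) = bn_list p @ bn_list q"

definition bn :: "pat \<Rightarrow> name set" where
  "bn p = set (bn_list p)"

fun vn :: "pat \<Rightarrow> name set" where
  "vn (PBind x) = {}"
| "vn (PVar x) = {x}"
| "vn (PProt x) = {}"
| "vn (PComp p q) = vn p \<union> vn q"

fun pn :: "pat \<Rightarrow> name set" where
  "pn (PBind x) = {}"
| "pn (PVar x) = {}"
| "pn (PProt x) = {x}"
| "pn (PComp p q) = pn p \<union> pn q"

definition fnp :: "pat \<Rightarrow> name set" where
  "fnp p = vn p \<union> pn p"

definition wf_pat :: "pat \<Rightarrow> bool" where
  "wf_pat p \<longleftrightarrow> distinct (bn_list p) \<and> bn p \<inter> fnp p = {}"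

fun communicable :: "pat \<Rightarrow> bool" where
  "communicable (PBind x) = False"
| "communicable (PVar x) = True"
| "communicable (PProt x) = False"
| "communicable (PComp p q) = (communicable p \<and> communicable q)"

text \<open>Protection of a communicable pattern (identity on other patterns, never used there).\<close>
fun protect :: "pat \<Rightarrow> pat" where
  "protect (PVar x) = PProt x"
| "protect (PComp p q) = PComp (protect p) (protect q)"
| "protect p = p"

type_synonym subst = "name \<Rightarrow> pat option"

definition is_subst :: "subst \<Rightarrow> bool" where
  "is_subst \<sigma> \<longleftrightarrow> finite (dom \<sigma>) \<and> (\<forall>q\<in>ran \<sigma>. communicable q)"

fun psubst :: "subst \<Rightarrow> pat \<Rightarrow> pat" where
  "psubst \<sigma> (PVar x) = (case \<sigma> x of Some q \<Rightarrow> q | None \<Rightarrow> PVar x)"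
| "psubst \<sigma> (PProt x) = (case \<sigma> x of Some q \<Rightarrow> protect q | None \<Rightarrow> PProt x)"
| "psubst \<sigma> (PBind x) = PBind x"
| "psubst \<sigma> (PComp p q) = PComp (psubst \<sigma> p) (psubst \<sigma> q)"

definition munion :: "subst \<Rightarrow> subst \<Rightarrow> subst option" where
  "munion s1 s2 = (if (\<forall>x \<in> dom s1 \<inter> dom s2. s1 x = s2 x) then Some (s1 ++ s2) else None)"

fun unify :: "pat \<Rightarrow> pat \<Rightarrow> (subst \<times> subst) option" where
  "unify (PVar x) (PVar y) = (if x = y then Some (Map.empty, Map.empty) else None)"
| "unify (PVar x) (PProt y) = (if x = y then Some (Map.empty, Map.empty) else None)"
| "unify (PProt x) (PVar y) = (if x = y then Some (Map.empty, Map.empty) else None)"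
| "unify (PProt x) (PProt y) = (if x = y then Some (Map.empty, Map.empty) else None)"
| "unify (PBind x) q = (if communicable q then Some ([x \<mapsto> q], Map.empty) else None)"
| "unify p (PBind x) = (if communicable p then Some (Map.empty, [x \<mapsto> p]) else None)"
| "unify (PComp p1 p2) (PComp q1 q2) =
     (case (unify p1 q1, unify p2 q2) of
        (Some (s1, r1), Some (s2, r2)) \<Rightarrow>
          (case (munion s1 s2, munion r1 r2) of
             (Some s, Some r) \<Rightarrow> Some (s, r)
           | _ \<Rightarrow> None)
      | _ \<Rightarrow> None)"
| "unify _ _ = None"

datatype proc = PZero | PPar proc proc | PRep proc | PNew name proc | PCase pat proc

fun fn :: "proc \<Rightarrow> name set" where
  "fn PZero = {}"
| "fn (PPar P Q) = fn P \<union> fn Q"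
| "fn (PRep P) = fn P"
| "fn (PNew x P) = fn P - {x}"
| "fn (PCase p P) = fnp p \<union> (fn P - bn p)"

fun bnames :: "proc \<Rightarrow> name set" where
  "bnames PZero = {}"
| "bnames (PPar P Q) = bnames P \<union> bnames Q"
| "bnames (PRep P) = bnames P"
| "bnames (PNew x P) = insert x (bnames P)"
| "bnames (PCase p P) = bn p \<union> bnames P"

fun wf_proc :: "proc \<Rightarrow> bool" where
  "wf_proc PZero = True"
| "wf_proc (PPar P Q) = (wf_proc P \<and> wf_proc Q)"
| "wf_proc (PRep P) = wf_proc P"
| "wf_proc (PNew x P) = wf_proc P"
| "wf_proc (PCase p P) = (wf_pat p \<and> wf_proc P)"

definition swapn :: "name \<Rightarrow> name \<Rightarrow> name \<Rightarrow> name" where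
  "swapn a b z = (if z = a then b else if z = b then a else z)"

fun swapp :: "name \<Rightarrow> name \<Rightarrow> pat \<Rightarrow> pat" where
  "swapp a b (PBind x) = PBind (swapn a b x)"
| "swapp a b (PVar x) = PVar (swapn a b x)"
| "swapp a b (PProt x) = PProt (swapn a b x)"
| "swapp a b (PComp p q) = PComp (swapp a b p) (swapp a b q)"

fun swap :: "name \<Rightarrow> name \<Rightarrow> proc \<Rightarrow> proc" where
  "swap a b PZero = PZero"
| "swap a b (PPar P Q) = PPar (swap a b P) (swap a b Q)"
| "swap a b (PRep P) = PRep (swap a b P)"
| "swap a b (PNew x P) = PNew (swapn a b x) (swap a b P)"
| "swap a b (PCase p P) = PCase (swapp a b p) (swap a b P)"

inductive alpha :: "proc \<Rightarrow> proc \<Rightarrow> bool" where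
  a_refl: "alpha P P"
| a_sym: "alpha P Q \<Longrightarrow> alpha Q P"
| a_trans: "alpha P Q \<Longrightarrow> alpha Q R \<Longrightarrow> alpha P R"
| a_par: "alpha P P' \<Longrightarrow> alpha Q Q' \<Longrightarrow> alpha (PPar P Q) (PPar P' Q')"
| a_rep: "alpha P P' \<Longrightarrow> alpha (PRep P) (PRep P')"
| a_new: "alpha P P' \<Longrightarrow> alpha (PNew x P) (PNew x P')"
| a_case: "alpha P P' \<Longrightarrow> alpha (PCase p P) (PCase p P')"
| a_new_ren: "y \<notin> fn (PNew x P) \<Longrightarrow> alpha (PNew x P) (PNew y (swap x y P))"
| a_case_ren: "x \<in> bn p \<Longrightarrow> y \<notin> fn (PCase p P) \<Longrightarrow> y \<notin> bn p \<Longrightarrow>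
     alpha (PCase p P) (PCase (swapp x y p) (swap x y P))"

text \<open>Naive substitution; it is capture avoiding when no bound name of the process
  lies in the domain of the substitution or occurs in its range.\<close>
fun nsubst :: "subst \<Rightarrow> proc \<Rightarrow> proc" where
  "nsubst \<sigma> PZero = PZero"
| "nsubst \<sigma> (PPar P Q) = PPar (nsubst \<sigma> P) (nsubst \<sigma> Q)"
| "nsubst \<sigma> (PRep P) = PRep (nsubst \<sigma> P)"
| "nsubst \<sigma> (PNew x P) = PNew x (nsubst \<sigma> P)"
| "nsubst \<sigma> (PCase p P) = PCase (psubst \<sigma> p) (nsubst \<sigma> P)"

definition ran_names :: "subst \<Rightarrow> name set" where
  "ran_names \<sigma> = (\<Union>q\<in>ran \<sigma>. fnp q \<union> bn q)"

text \<open>csubst s P Q: Q is (a representative, up to alpha, of) the capture-avoiding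
  application of s to P.\<close>
definition csubst :: "subst \<Rightarrow> proc \<Rightarrow> proc \<Rightarrow> bool" where
  "csubst \<sigma> P Q \<longleftrightarrow> (\<exists>P0. alpha P P0 \<and> bnames P0 \<inter> (dom \<sigma> \<union> ran_names \<sigma>) = {}
                         \<and> Q = nsubst \<sigma> P0)"

inductive scong :: "proc \<Rightarrow> proc \<Rightarrow> bool" where
  s_alpha: "alpha P Q \<Longrightarrow> scong P Q"
| s_refl: "scong P P"
| s_sym: "scong P Q \<Longrightarrow> scong Q P"
| s_trans: "scong P Q \<Longrightarrow> scong Q R \<Longrightarrow> scong P R"
| s_par: "scong P P' \<Longrightarrow> scong Q Q' \<Longrightarrow> scong (PPar P Q) (PPar P' Q')"
| s_rep: "scong P P' \<Longrightarrow> scong (PRep P) (PRep P')"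
| s_new: "scong P P' \<Longrightarrow> scong (PNew x P) (PNew x P')"
| s_case: "scong P P' \<Longrightarrow> scong (PCase p P) (PCase p P')"
| s_par_zero: "scong (PPar P PZero) P"
| s_par_comm: "scong (PPar P Q) (PPar Q P)"
| s_par_assoc: "scong (PPar P (PPar Q R)) (PPar (PPar P Q) R)"
| s_new_zero: "scong (PNew n PZero) PZero"
| s_new_comm: "scong (PNew n (PNew m P)) (PNew m (PNew n P))"
| s_rep_unf: "scong (PRep P) (PPar P (PRep P))"
| s_extr: "n \<notin> fn P \<Longrightarrow> scong (PPar P (PNew n Q)) (PNew n (PPar P Q))"

definition scong_rel :: "(proc \<times> proc) set" where
  "scong_rel = {(P, Q). scong P Q}"

datatype lab = Tau | Lab "name list" pat   \<comment> \<open>Lab ns p  is  (nu ns) p\<close>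

fun lnames :: "lab \<Rightarrow> name set" where
  "lnames Tau = {}"
| "lnames (Lab ns p) = set ns \<union> fnp p \<union> bn p"

fun News :: "name list \<Rightarrow> proc \<Rightarrow> proc" where
  "News [] P = P"
| "News (n # ns) P = PNew n (News ns P)"

inductive ltr :: "proc \<Rightarrow> lab \<Rightarrow> proc \<Rightarrow> bool" where
  t_case: "ltr (PCase p P) (Lab [] p) P"
| t_resnon: "ltr P \<mu> P' \<Longrightarrow> n \<notin> lnames \<mu> \<Longrightarrow> ltr (PNew n P) \<mu> (PNew n P')"
| t_open: "ltr P (Lab ns p) P' \<Longrightarrow> m \<in> vn p - (set ns \<union> pn p \<union> bn p) \<Longrightarrow>
     ltr (PNew m P) (Lab (ns @ [m]) p) P'"
| t_unify: "ltr P (Lab ms p) P' \<Longrightarrow> ltr Q (Lab ns q) Q' \<Longrightarrow>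
     unify p q = Some (\<sigma>, \<rho>) \<Longrightarrow>
     set ms \<inter> fn Q = {} \<Longrightarrow> set ns \<inter> fn P = {} \<Longrightarrow> set ms \<inter> set ns = {} \<Longrightarrow>
     csubst \<sigma> P' P'' \<Longrightarrow> csubst \<rho> Q' Q'' \<Longrightarrow>
     ltr (PPar P Q) Tau (News (ms @ ns) (PPar P'' Q''))"
| t_parint_l: "ltr P Tau P' \<Longrightarrow> ltr (PPar P Q) Tau (PPar P' Q)"
| t_parint_r: "ltr Q Tau Q' \<Longrightarrow> ltr (PPar P Q) Tau (PPar P Q')"
| t_parext_l: "ltr P (Lab ns p) P' \<Longrightarrow> (set ns \<union> bn p) \<inter> fn Q = {} \<Longrightarrow>
     ltr (PPar P Q) (Lab ns p) (PPar P' Q)"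
| t_parext_r: "ltr Q (Lab ns p) Q' \<Longrightarrow> (set ns \<union> bn p) \<inter> fn P = {} \<Longrightarrow>
     ltr (PPar P Q) (Lab ns p) (PPar P Q')"
| t_rep: "ltr (PPar (PRep P) P) \<mu> P' \<Longrightarrow> ltr (PRep P) \<mu> P'"
| t_alpha: "alpha P Q \<Longrightarrow> ltr Q \<mu> Q' \<Longrightarrow> alpha Q' P' \<Longrightarrow> ltr P \<mu> P'"

end

theory Submission
  imports Defs
begin


fun mapp :: "(name \<Rightarrow> name) \<Rightarrow> pat \<Rightarrow> pat" where
  "mapp f (PBind x) = PBind (f x)"
| "mapp f (PVar x) = PVar (f x)"
| "mapp f (PProt x) = PProt (f x)"
| "mapp f (PComp p q) = PComp (mapp f p) (mapp f q)"

fun mapP :: "(name \<Rightarrow> name) \<Rightarrow> proc \<Rightarrow> proc" where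
  "mapP f PZero = PZero"
| "mapP f (PPar P Q) = PPar (mapP f P) (mapP f Q)"
| "mapP f (PRep P) = PRep (mapP f P)"
| "mapP f (PNew x P) = PNew (f x) (mapP f P)"
| "mapP f (PCase p P) = PCase (mapp f p) (mapP f P)"

fun psz :: "pat \<Rightarrow> nat" where
  "psz (PComp p q) = psz p + psz q + 1"
| "psz _ = 1"

fun sz :: "proc \<Rightarrow> nat" where
  "sz PZero = 1"
| "sz (PPar P Q) = sz P + sz Q + 1"
| "sz (PRep P) = sz P + 1"
| "sz (PNew x P) = sz P + 1"
| "sz (PCase p P) = psz p + sz P + 1"

fun wsz :: "proc \<Rightarrow> nat" where
  "wsz PZero = 1"
| "wsz (PPar P Q) = wsz P + wsz Q + 1"
| "wsz (PRep P) = 3 * wsz P + 3"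
| "wsz (PNew x P) = wsz P + 1"
| "wsz (PCase p P) = psz p + wsz P + 1"

fun maxpat :: "proc \<Rightarrow> nat" where
  "maxpat PZero = 1"
| "maxpat (PPar P Q) = max (maxpat P) (maxpat Q)"
| "maxpat (PRep P) = maxpat P"
| "maxpat (PNew x P) = maxpat P"
| "maxpat (PCase p P) = max (psz p) (maxpat P)"

fun pnames :: "pat \<Rightarrow> name set" where
  "pnames (PBind x) = {x}"
| "pnames (PVar x) = {x}"
| "pnames (PProt x) = {x}"
| "pnames (PComp p q) = pnames p \<union> pnames q"

fun names :: "proc \<Rightarrow> name set" where
  "names PZero = {}"
| "names (PPar P Q) = names P \<union> names Q"
| "names (PRep P) = names P"
| "names (PNew x P) = insert x (names P)"
| "names (PCase p P) = pnames p \<union> names P"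

lemma psz_pos[simp]: "psz p \<ge> 1" by (cases p) auto
lemma sz_pos[simp]: "sz P \<ge> 1" by (cases P) auto
lemma wsz_pos[simp]: "wsz P \<ge> 1" by (cases P) auto
lemma maxpat_pos[simp]: "maxpat P \<ge> 1" by (induct P) auto
lemma sz_le_wsz: "sz P \<le> wsz P" by (induct P) auto

lemma swapn_swapn[simp]: "swapn a b (swapn a b z) = z" by (simp add: swapn_def)
lemma swapn_simps[simp]: "swapn a b a = b" "swapn a b b = a"
  "z \<noteq> a \<Longrightarrow> z \<noteq> b \<Longrightarrow> swapn a b z = z" by (auto simp: swapn_def)
lemma swapn_comm: "swapn a b = swapn b a" by (auto simp: swapn_def fun_eq_iff)
lemma swapn_same[simp]: "swapn a a = id" by (auto simp: swapn_def fun_eq_iff)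
lemma inj_swapn[simp]: "inj (swapn a b)" by (metis injI swapn_swapn)
lemma bij_swapn[simp]: "bij (swapn a b)" by (metis bijI' swapn_swapn)
lemma swapn_eq_iff[simp]: "swapn a b x = swapn a b y \<longleftrightarrow> x = y" by (metis swapn_swapn)
lemma swapn_comp_swapn[simp]: "swapn a b \<circ> swapn a b = id" by (auto simp: fun_eq_iff)

lemma swapp_mapp: "swapp a b p = mapp (swapn a b) p" by (induct p) auto
lemma swap_mapP: "swap a b P = mapP (swapn a b) P" by (induct P) (auto simp: swapp_mapp)

lemma mapp_comp[simp]: "mapp f (mapp g p) = mapp (f \<circ> g) p" by (induct p) auto
lemma mapP_comp[simp]: "mapP f (mapP g P) = mapP (f \<circ> g) P" by (induct P) (auto simp: comp_def)
lemma mapp_id'[simp]: "mapp (\<lambda>x. x) p = p" by (induct p) auto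
lemma mapp_id[simp]: "mapp id p = p" by (induct p) auto
lemma mapP_id[simp]: "mapP id P = P" by (induct P) (auto simp: id_def)
lemma mapP_id'[simp]: "mapP (\<lambda>x. x) P = P" by (induct P) (auto simp: id_def[symmetric])
lemma mapp_cong: "(\<And>z. z \<in> pnames p \<Longrightarrow> f z = g z) \<Longrightarrow> mapp f p = mapp g p"
  by (induct p) auto
lemma mapP_cong: "(\<And>z. z \<in> names P \<Longrightarrow> f z = g z) \<Longrightarrow> mapP f P = mapP g P"
  by (induct P) (auto intro: mapp_cong)
lemma mapp_ident: "(\<And>z. z \<in> pnames p \<Longrightarrow> f z = z) \<Longrightarrow> mapp f p = p"
  using mapp_cong[of p f id] by simp
lemma mapP_ident: "(\<And>z. z \<in> names P \<Longrightarrow> f z = z) \<Longrightarrow> mapP f P = P"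
  using mapP_cong[of P f id] by simp

lemma bn_list_mapp[simp]: "bn_list (mapp f p) = map f (bn_list p)" by (induct p) auto
lemma bn_mapp[simp]: "bn (mapp f p) = f ` bn p" by (simp add: bn_def)
lemma vn_mapp[simp]: "vn (mapp f p) = f ` vn p" by (induct p) auto
lemma pn_mapp[simp]: "pn (mapp f p) = f ` pn p" by (induct p) auto
lemma fnp_mapp[simp]: "fnp (mapp f p) = f ` fnp p" by (auto simp: fnp_def image_Un)
lemma pnames_mapp[simp]: "pnames (mapp f p) = f ` pnames p" by (induct p) auto
lemma psz_mapp[simp]: "psz (mapp f p) = psz p" by (induct p) auto
lemma communicable_mapp[simp]: "communicable (mapp f p) = communicable p" by (induct p) auto
lemma bn_simps[simp]: "bn (PBind x) = {x}" "bn (PVar x) = {}" "bn (PProt x) = {}"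
  "bn (PComp p q) = bn p \<union> bn q" by (auto simp: bn_def)
lemma fnp_simps[simp]: "fnp (PBind x) = {}" "fnp (PVar x) = {x}" "fnp (PProt x) = {x}"
  "fnp (PComp p q) = fnp p \<union> fnp q" by (auto simp: fnp_def)
lemma pnames_eq: "pnames p = bn p \<union> fnp p" by (induct p) auto
lemma finite_pnames[simp]: "finite (pnames p)" by (induct p) auto
lemma finite_names[simp]: "finite (names P)" by (induct P) auto

lemma wf_pat_mapp[simp]: "inj f \<Longrightarrow> wf_pat (mapp f p) = wf_pat p"
proof -
  assume f: "inj f"
  have "distinct (map f (bn_list p)) = distinct (bn_list p)"
    using f by (simp add: distinct_map inj_on_subset[of f UNIV])
  moreover have "f ` bn p \<inter> f ` fnp p = f ` (bn p \<inter> fnp p)" using f by (simp add: image_Int)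
  ultimately show ?thesis using f unfolding wf_pat_def
    by (simp add: bn_def)
qed

lemma fn_mapP[simp]: "inj f \<Longrightarrow> fn (mapP f P) = f ` fn P"
  by (induct P) (auto simp: image_Un image_set_diff)
lemma bnames_mapP[simp]: "bnames (mapP f P) = f ` bnames P" by (induct P) auto
lemma names_mapP[simp]: "names (mapP f P) = f ` names P" by (induct P) auto
lemma sz_mapP[simp]: "sz (mapP f P) = sz P" by (induct P) auto
lemma wsz_mapP[simp]: "wsz (mapP f P) = wsz P" by (induct P) auto
lemma maxpat_mapP[simp]: "maxpat (mapP f P) = maxpat P" by (induct P) auto
lemma wf_mapP[simp]: "inj f \<Longrightarrow> wf_proc (mapP f P) = wf_proc P" by (induct P) auto

lemma fn_sub_names: "fn P \<subseteq> names P" by (induct P) (auto simp: pnames_eq)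
lemma bnames_sub_names: "bnames P \<subseteq> names P" by (induct P) (auto simp: pnames_eq)
lemma names_sub: "names P \<subseteq> fn P \<union> bnames P" by (induct P) (auto simp: pnames_eq)
lemma finite_fn[simp]: "finite (fn P)" by (rule finite_subset[OF fn_sub_names]) simp
lemma finite_bnames[simp]: "finite (bnames P)" by (rule finite_subset[OF bnames_sub_names]) simp

lemma swapn_comp_inj: "inj f \<Longrightarrow> f \<circ> swapn x y = swapn (f x) (f y) \<circ> f"
  by (auto simp: fun_eq_iff swapn_def inj_eq)

lemma mapP_swap: "inj f \<Longrightarrow> mapP f (swap x y P) = swap (f x) (f y) (mapP f P)"
  by (simp add: swap_mapP swapn_comp_inj)
lemma mapp_swapp: "inj f \<Longrightarrow> mapp f (swapp x y p) = swapp (f x) (f y) (mapp f p)"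
  by (simp add: swapp_mapp swapn_comp_inj)


lemma alpha_mapP: "alpha P Q \<Longrightarrow> inj f \<Longrightarrow> alpha (mapP f P) (mapP f Q)"
proof (induct rule: alpha.induct)
  case (a_new_ren y x P)
  have "f y \<notin> fn (PNew (f x) (mapP f P))" using a_new_ren by (auto simp: inj_eq)
  hence "alpha (PNew (f x) (mapP f P)) (PNew (f y) (swap (f x) (f y) (mapP f P)))"
    by (rule alpha.a_new_ren)
  thus ?case using a_new_ren by (simp add: mapP_swap)
next
  case (a_case_ren x p y P)
  have "f x \<in> bn (mapp f p)" using a_case_ren by auto
  moreover have "f y \<notin> fn (PCase (mapp f p) (mapP f P))"
    using a_case_ren by (auto simp: inj_eq)
  moreover have "f y \<notin> bn (mapp f p)" using a_case_ren by (auto simp: inj_eq)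
  ultimately have "alpha (PCase (mapp f p) (mapP f P))
      (PCase (swapp (f x) (f y) (mapp f p)) (swap (f x) (f y) (mapP f P)))"
    by (rule alpha.a_case_ren)
  thus ?case using a_case_ren by (simp add: mapP_swap mapp_swapp)
qed (auto intro: alpha.intros)

lemma alpha_sz: "alpha P Q \<Longrightarrow> sz P = sz Q \<and> wsz P = wsz Q \<and> maxpat P = maxpat Q"
  by (induct rule: alpha.induct) (auto simp: swap_mapP swapp_mapp)

lemma alpha_wf: "alpha P Q \<Longrightarrow> wf_proc P = wf_proc Q"
  by (induct rule: alpha.induct) (auto simp: swap_mapP swapp_mapp)

lemma swapn_image_fix: "a \<notin> S \<Longrightarrow> b \<notin> S \<Longrightarrow> swapn a b ` S = S"
  by (auto simp: swapn_def image_iff)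

lemma alpha_fn: "alpha P Q \<Longrightarrow> wf_proc P \<Longrightarrow> fn P = fn Q"
proof (induct rule: alpha.induct)
  case (a_sym P Q) thus ?case using alpha_wf by auto
next
  case (a_trans P Q R) thus ?case using alpha_wf by auto
next
  case (a_new_ren y x P)
  have "fn (PNew y (swap x y P)) = swapn x y ` fn (PNew x P)"
    by (simp add: swap_mapP image_set_diff)
  also have "\<dots> = fn (PNew x P)" using a_new_ren by (intro swapn_image_fix) auto
  finally show ?case by simp
next
  case (a_case_ren x p y P)
  have "x \<notin> fn (PCase p P)" using a_case_ren by (auto simp: wf_pat_def)
  have "fn (PCase (swapp x y p) (swap x y P)) = swapn x y ` fn (PCase p P)"
    by (simp add: swap_mapP swapp_mapp image_set_diff image_Un)
  also have "\<dots> = fn (PCase p P)" using a_case_ren \<open>x \<notin> fn (PCase p P)\<close>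
    by (intro swapn_image_fix) auto
  finally show ?case by simp
qed auto

lemma alpha_wf_fn: "alpha P Q \<Longrightarrow> wf_proc P \<Longrightarrow> wf_proc Q \<and> fn P = fn Q"
  using alpha_wf alpha_fn by blast

subsection \<open>Lists of swaps\<close>

fun swaps :: "(name \<times> name) list \<Rightarrow> name \<Rightarrow> name" where
  "swaps [] = id"
| "swaps ((a,c)#xs) = swapn a c \<circ> swaps xs"

lemma bij_swaps[simp]: "bij (swaps xs)"
proof (induct xs rule: swaps.induct)
  case 1 show ?case by (simp only: swaps.simps bij_id)
next
  case (2 a c xs) thus ?case by (simp only: swaps.simps) (rule bij_comp, simp_all)
qed
lemma inj_swaps[simp]: "inj (swaps xs)" using bij_swaps bij_is_inj by blast

lemma swaps_other: "z \<notin> fst ` set xs \<Longrightarrow> z \<notin> snd ` set xs \<Longrightarrow> swaps xs z = z"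
  by (induct xs rule: swaps.induct) (auto simp: swapn_def)

lemma swaps_pair: "distinct (map fst xs @ map snd xs) \<Longrightarrow> (a,c) \<in> set xs \<Longrightarrow> swaps xs a = c"
proof (induct xs rule: swaps.induct)
  case 1 thus ?case by simp
next
  case (2 b d xs)
  show ?case
  proof (cases "(a,c) = (b,d)")
    case True
    hence "swaps xs b = b" using 2 by (intro swaps_other) (auto simp: image_iff)
    thus ?thesis using True by simp
  next
    case False
    hence "(a,c) \<in> set xs" using 2 by auto
    hence "swaps xs a = c" using 2 by auto
    moreover have "c \<noteq> b" "c \<noteq> d" using 2 \<open>(a,c) \<in> set xs\<close> by (auto simp: image_iff)
    ultimately show ?thesis by simp
  qed
qed

lemma fresh_name: "finite S \<Longrightarrow> \<exists>c::name. c \<notin> S"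
  using ex_new_if_finite[OF infinite_UNIV_nat] by auto

lemma fresh_list: "finite S \<Longrightarrow> \<exists>cs::name list. length cs = n \<and> distinct cs \<and> set cs \<inter> S = {}"
proof -
  assume "finite S"
  hence "infinite (UNIV - S)" using infinite_UNIV_nat Diff_infinite_finite by blast
  then obtain T where T: "T \<subseteq> UNIV - S" "finite T" "card T = n"
    using infinite_arbitrarily_large by blast
  show ?thesis
    by (rule exI[of _ "sorted_list_of_set T"]) (use T in auto)
qed

lemma RC:
  assumes "distinct (map fst xs @ map snd xs)" "fst ` set xs \<subseteq> bn p"
    "snd ` set xs \<inter> names (PCase p A) = {}"
  shows "alpha (PCase p A) (PCase (mapp (swaps xs) p) (mapP (swaps xs) A))"
  using assms
proof (induct xs rule: swaps.induct)
  case 1 thus ?case by (simp add: alpha.a_refl)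
next
  case (2 b c xs)
  let ?p = "mapp (swaps xs) p" and ?A = "mapP (swaps xs) A"
  have IH: "alpha (PCase p A) (PCase ?p ?A)" using 2 by auto
  have bfix: "swaps xs b = b" using 2 by (intro swaps_other) (auto simp: image_iff)
  have cfix: "swaps xs c = c" using 2 by (intro swaps_other) (auto simp: image_iff)
  have "b \<in> bn ?p" using 2 bfix by (force simp: image_iff)
  moreover have "c \<notin> fn (PCase ?p ?A)"
  proof
    assume "c \<in> fn (PCase ?p ?A)"
    hence "c \<in> swaps xs ` fn (PCase p A)" by (simp add: image_Un image_set_diff)
    then obtain w where "w \<in> fn (PCase p A)" "swaps xs w = c" by auto
    hence "w = c" using cfix by (metis inj_eq inj_swaps)
    thus False using \<open>w \<in> fn (PCase p A)\<close> 2(4) fn_sub_names[of "PCase p A"] by auto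
  qed
  moreover have "c \<notin> bn ?p"
  proof
    assume "c \<in> bn ?p"
    then obtain w where "w \<in> bn p" "swaps xs w = c" by auto
    hence "w = c" using cfix by (metis inj_eq inj_swaps)
    thus False using \<open>w \<in> bn p\<close> 2(4) by (auto simp: pnames_eq)
  qed
  ultimately have "alpha (PCase ?p ?A) (PCase (swapp b c ?p) (swap b c ?A))"
    by (rule alpha.a_case_ren)
  thus ?case using IH by (simp only: swap_mapP swapp_mapp mapp_comp mapP_comp swaps.simps)
      (rule alpha.a_trans)
qed


lemma fn_PCase_sub: "fn A \<subseteq> bn p \<union> fn (PCase p A)" by auto

lemma GL: "inj f \<Longrightarrow> wf_proc X \<Longrightarrow> (\<forall>z\<in>fn X. f z = z) \<Longrightarrow> alpha X (mapP f X)"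
proof (induct "sz X" arbitrary: X f rule: less_induct)
  case (less X f)
  show ?case
  proof (cases X)
    case PZero thus ?thesis by (simp add: alpha.a_refl)
  next
    case (PPar P Q)
    have "alpha P (mapP f P)" using less PPar by (intro less(1)) auto
    moreover have "alpha Q (mapP f Q)" using less PPar by (intro less(1)) auto
    ultimately show ?thesis using PPar by (simp add: alpha.a_par)
  next
    case (PRep P)
    have "alpha P (mapP f P)" using less PRep by (intro less(1)) auto
    thus ?thesis using PRep by (simp add: alpha.a_rep)
  next
    case (PNew n A)
    obtain c where c: "c \<notin> names A \<union> {n, f n} \<union> f ` names A"
      using fresh_name[of "names A \<union> {n, f n} \<union> f ` names A"] by auto
    have cA: "c \<notin> fn A" using c fn_sub_names by auto
    have s1: "alpha (PNew n A) (PNew c (swap n c A))"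
      by (rule alpha.a_new_ren) (use cA in auto)
    define \<rho> where "\<rho> = swapn (f n) c \<circ> f \<circ> swapn n c"
    have injr: "inj \<rho>" unfolding \<rho>_def using less(2) by (simp add: inj_compose)
    have fixr: "\<forall>w\<in>fn (swap n c A). \<rho> w = w"
    proof
      fix w assume "w \<in> fn (swap n c A)"
      then obtain z where z: "z \<in> fn A" "w = swapn n c z" by (auto simp: swap_mapP)
      show "\<rho> w = w"
      proof (cases "z = n")
        case True thus ?thesis using z by (simp add: \<rho>_def)
      next
        case False
        have "z \<noteq> c" using z cA by auto
        hence wz: "w = z" using z False by simp
        have fz: "f z = z" using less(4) PNew z False by auto
        have "z \<noteq> f n" using fz False less(2) by (metis inj_eq)
        thus ?thesis using wz fz \<open>z \<noteq> c\<close> False by (simp add: \<rho>_def)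
      qed
    qed
    have s2: "alpha (swap n c A) (mapP \<rho> (swap n c A))"
      using less PNew injr fixr by (intro less(1)) (auto simp: swap_mapP)
    have "\<rho> \<circ> swapn n c = swapn (f n) c \<circ> f" by (auto simp: \<rho>_def fun_eq_iff)
    hence s3: "mapP \<rho> (swap n c A) = swap (f n) c (mapP f A)" by (simp add: swap_mapP)
    have "c \<notin> fn (PNew (f n) (mapP f A))" using c less(2) fn_sub_names by auto
    hence s4: "alpha (PNew (f n) (mapP f A)) (PNew c (swap (f n) c (mapP f A)))"
      by (rule alpha.a_new_ren)
    have "alpha (PNew c (swap n c A)) (PNew c (swap (f n) c (mapP f A)))"
      using s2 s3 by (metis alpha.a_new)
    thus ?thesis using s1 s4 PNew by (metis alpha.a_sym alpha.a_trans mapP.simps(4))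
  next
    case (PCase p A)
    have wfp: "wf_pat p" and wfA: "wf_proc A" using less PCase by auto
    define bs where "bs = bn_list p"
    obtain cs where cs: "length cs = length bs" "distinct cs"
      "set cs \<inter> (names X \<union> f ` names X) = {}"
      using fresh_list[of "names X \<union> f ` names X" "length bs"] by auto
    define xs1 where "xs1 = zip bs cs"
    define xs2 where "xs2 = zip (map f bs) cs"
    define t1 where "t1 = swaps xs1"
    define t2 where "t2 = swaps xs2"
    have dbs: "distinct bs" using wfp by (simp add: wf_pat_def bs_def)
    have bsX: "set bs \<subseteq> names X" using PCase by (simp add: bs_def bn_def[symmetric] pnames_eq) blast
    have m1: "map fst xs1 = bs" "map snd xs1 = cs" using cs by (auto simp: xs1_def)
    have m2: "map fst xs2 = map f bs" "map snd xs2 = cs" using cs by (auto simp: xs2_def)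
    have f1: "fst ` set xs1 = set bs" "snd ` set xs1 = set cs" by (metis list.set_map m1)+
    have f2: "fst ` set xs2 = f ` set bs" "snd ` set xs2 = set cs" by (metis list.set_map m2 list.set_map)+
    have d1: "distinct (map fst xs1 @ map snd xs1)" using m1 dbs cs bsX by auto
    have d2: "distinct (map fst xs2 @ map snd xs2)" using m2 dbs cs bsX less(2)
      by (auto simp: distinct_map inj_on_subset[of f UNIV])
    have key: "\<And>z. z \<in> bn p \<union> fn X \<Longrightarrow> t2 (f z) = t1 z"
    proof -
      fix z assume z: "z \<in> bn p \<union> fn X"
      show "t2 (f z) = t1 z"
      proof (cases "z \<in> bn p")
        case True
        hence "z \<in> set bs" by (simp add: bs_def bn_def)
        then obtain i where i: "i < length bs" "bs ! i = z" by (metis in_set_conv_nth)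
        have "zip bs cs ! i \<in> set (zip bs cs)" by (rule nth_mem) (use i cs in simp)
        moreover have "zip bs cs ! i = (z, cs ! i)" using i cs by simp
        ultimately have "(z, cs ! i) \<in> set xs1" by (simp add: xs1_def)
        hence e1: "t1 z = cs ! i" unfolding t1_def using d1 by (rule swaps_pair[rotated])
        have "zip (map f bs) cs ! i \<in> set (zip (map f bs) cs)" by (rule nth_mem) (use i cs in simp)
        moreover have "zip (map f bs) cs ! i = (f z, cs ! i)" using i cs by simp
        ultimately have "(f z, cs ! i) \<in> set xs2" by (simp add: xs2_def)
        hence "t2 (f z) = cs ! i" unfolding t2_def using d2 by (rule swaps_pair[rotated])
        thus ?thesis using e1 by simp
      next
        case False
        hence zX: "z \<in> fn X" using z by auto
        hence fz: "f z = z" using less(4) by auto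
        have zn: "z \<in> names X" using zX fn_sub_names by auto
        have "z \<notin> set bs" using False by (simp add: bs_def bn_def)
        have "z \<notin> set cs" using cs zn by auto
        hence "t1 z = z" unfolding t1_def using \<open>z \<notin> set bs\<close> f1 by (intro swaps_other) auto
        moreover have "z \<notin> f ` set bs"
        proof
          assume "z \<in> f ` set bs"
          then obtain b where "b \<in> set bs" "z = f b" by auto
          hence "b = z" using fz less(2) by (metis inj_eq)
          thus False using \<open>b \<in> set bs\<close> \<open>z \<notin> set bs\<close> by simp
        qed
        hence "t2 z = z" unfolding t2_def using \<open>z \<notin> set cs\<close> f2 by (intro swaps_other) auto
        ultimately show ?thesis using fz by simp
      qed
    qed
    have h1: "alpha X (PCase (mapp t1 p) (mapP t1 A))"
    proof -
      have a: "distinct (map fst xs1 @ map snd xs1)" by (rule d1)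
      have b: "fst ` set xs1 \<subseteq> bn p" using f1 by (simp add: bs_def bn_def)
      have c: "snd ` set xs1 \<inter> names (PCase p A) = {}" using f1 cs PCase by auto
      show ?thesis using RC[OF a b c] PCase t1_def by simp
    qed
    have h2: "alpha (mapP f X) (PCase (mapp t2 (mapp f p)) (mapP t2 (mapP f A)))"
    proof -
      have a: "distinct (map fst xs2 @ map snd xs2)" by (rule d2)
      have b: "fst ` set xs2 \<subseteq> bn (mapp f p)" using f2 by (simp add: bs_def bn_def)
      have c: "snd ` set xs2 \<inter> names (PCase (mapp f p) (mapP f A)) = {}"
        using f2 cs PCase by auto
      show ?thesis using RC[OF a b c] PCase t2_def by simp
    qed
    have h3: "mapp t1 p = mapp (t2 \<circ> f) p"
      by (rule mapp_cong) (use key PCase in \<open>auto simp: pnames_eq\<close>)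
    have bijt1: "bij t1" by (simp add: t1_def)
    define g where "g = t2 \<circ> f \<circ> inv t1"
    have injg: "inj g" unfolding g_def using less(2) bijt1
      by (simp add: inj_compose bij_imp_bij_inv bij_is_inj t2_def)
    have gt: "g \<circ> t1 = t2 \<circ> f" unfolding g_def using bijt1
      by (simp add: fun_eq_iff bij_is_inj)
    have fixg: "\<forall>w\<in>fn (mapP t1 A). g w = w"
    proof
      fix w assume "w \<in> fn (mapP t1 A)"
      then obtain z where z: "z \<in> fn A" "w = t1 z" using bijt1 by (auto simp: bij_is_inj)
      have "z \<in> bn p \<union> fn X" using z PCase by auto
      hence "t2 (f z) = t1 z" by (rule key)
      thus "g w = w" using z gt by (metis comp_apply)
    qed
    have h4: "alpha (mapP t1 A) (mapP (t2 \<circ> f) A)"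
    proof -
      have "alpha (mapP t1 A) (mapP g (mapP t1 A))"
        using less PCase injg fixg wfA bijt1 by (intro less(1)) (auto simp: bij_is_inj)
      thus ?thesis using gt by simp
    qed
    have "alpha (PCase (mapp t1 p) (mapP t1 A)) (PCase (mapp t1 p) (mapP (t2 \<circ> f) A))"
      using h4 by (rule alpha.a_case)
    hence "alpha (PCase (mapp t1 p) (mapP t1 A)) (PCase (mapp t2 (mapp f p)) (mapP t2 (mapP f A)))"
      using h3 by simp
    thus ?thesis using h1 h2 by (metis alpha.a_sym alpha.a_trans)
  qed
qed


definition ishape :: "proc \<Rightarrow> proc \<Rightarrow> bool" where
  "ishape X Z = (case X of
    PZero \<Rightarrow> Z = PZero
  | PPar A B \<Rightarrow> (\<exists>A' B'. Z = PPar A' B' \<and> alpha A A' \<and> alpha B B')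
  | PRep A \<Rightarrow> (\<exists>A'. Z = PRep A' \<and> alpha A A')
  | PNew n A \<Rightarrow> (\<exists>f B. bij f \<and> (\<forall>z\<in>fn X. f z = z) \<and> Z = PNew (f n) B \<and> alpha (mapP f A) B)
  | PCase p A \<Rightarrow> (\<exists>f B. bij f \<and> (\<forall>z\<in>fn X. f z = z) \<and> Z = PCase (mapp f p) B \<and> alpha (mapP f A) B))"

lemma ishape_refl: "ishape X X"
  by (cases X) (auto simp: ishape_def alpha.a_refl intro!: exI[of _ id])

lemma inv_fix: "bij f \<Longrightarrow> f z = z \<Longrightarrow> inv f z = z"
  by (metis bij_inv_eq_iff)

lemma ishape_sym: "ishape X Z \<Longrightarrow> alpha X Z \<Longrightarrow> wf_proc X \<Longrightarrow> ishape Z X"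
proof (cases X)
  case (PNew n A)
  assume "ishape X Z" "alpha X Z" "wf_proc X"
  then obtain f B where f: "bij f" "\<forall>z\<in>fn X. f z = z" "Z = PNew (f n) B" "alpha (mapP f A) B"
    using PNew by (auto simp: ishape_def)
  have fnZ: "fn Z = fn X" using alpha_fn \<open>alpha X Z\<close> \<open>wf_proc X\<close> by auto
  have "alpha (mapP (inv f) (mapP f A)) (mapP (inv f) B)"
    using f(4) by (rule alpha_mapP) (simp add: bij_is_inj bij_imp_bij_inv f(1))
  hence "alpha (mapP (inv f) B) A" using f(1) by (simp add: bij_is_inj alpha.a_sym)
  moreover have "inv f (f n) = n" using f(1) by (simp add: bij_is_inj)
  moreover have "\<forall>z\<in>fn Z. inv f z = z" using f(1) f(2) fnZ by (simp add: inv_fix)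
  ultimately show ?thesis using f PNew bij_imp_bij_inv[OF f(1)]
    by (auto simp: ishape_def intro!: exI[of _ "inv f"])
next
  case (PCase p A)
  assume "ishape X Z" "alpha X Z" "wf_proc X"
  then obtain f B where f: "bij f" "\<forall>z\<in>fn X. f z = z" "Z = PCase (mapp f p) B" "alpha (mapP f A) B"
    using PCase by (auto simp: ishape_def)
  have fnZ: "fn Z = fn X" using alpha_fn \<open>alpha X Z\<close> \<open>wf_proc X\<close> by auto
  have "alpha (mapP (inv f) (mapP f A)) (mapP (inv f) B)"
    using f(4) by (rule alpha_mapP) (simp add: bij_is_inj bij_imp_bij_inv f(1))
  hence "alpha (mapP (inv f) B) A" using f(1) by (simp add: bij_is_inj alpha.a_sym)
  moreover have "mapp (inv f) (mapp f p) = p" using f(1) by (simp add: bij_is_inj)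
  moreover have "\<forall>z\<in>fn Z. inv f z = z" using f(1) f(2) fnZ by (simp add: inv_fix)
  ultimately show ?thesis using f PCase bij_imp_bij_inv[OF f(1)]
    by (auto simp: ishape_def intro!: exI[of _ "inv f"])
qed (auto simp: ishape_def intro: alpha.a_sym)

lemma ishape_trans: "ishape X Y \<Longrightarrow> ishape Y Z \<Longrightarrow> alpha X Y \<Longrightarrow> wf_proc X \<Longrightarrow> ishape X Z"
proof (cases X)
  case (PNew n A)
  assume h: "ishape X Y" "ishape Y Z" "alpha X Y" "wf_proc X"
  then obtain f B where f: "bij f" "\<forall>z\<in>fn X. f z = z" "Y = PNew (f n) B" "alpha (mapP f A) B"
    using PNew by (auto simp: ishape_def)
  then obtain g C where g: "bij g" "\<forall>z\<in>fn Y. g z = z" "Z = PNew (g (f n)) C" "alpha (mapP g B) C"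
    using h by (auto simp: ishape_def)
  have fnY: "fn Y = fn X" using alpha_fn h by auto
  have "alpha (mapP (g \<circ> f) A) (mapP g B)" using alpha_mapP[OF f(4) bij_is_inj[OF g(1)]] by simp
  hence "alpha (mapP (g \<circ> f) A) C" using g(4) by (simp add: alpha.a_trans)
  moreover have "bij (g \<circ> f)" using f g by (simp add: bij_comp)
  ultimately show ?thesis using f g fnY PNew by (auto simp: ishape_def intro!: exI[of _ "g \<circ> f"])
next
  case (PCase p A)
  assume h: "ishape X Y" "ishape Y Z" "alpha X Y" "wf_proc X"
  then obtain f B where f: "bij f" "\<forall>z\<in>fn X. f z = z" "Y = PCase (mapp f p) B" "alpha (mapP f A) B"
    using PCase by (auto simp: ishape_def)
  then obtain g C where g: "bij g" "\<forall>z\<in>fn Y. g z = z" "Z = PCase (mapp g (mapp f p)) C" "alpha (mapP g B) C"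
    using h by (auto simp: ishape_def)
  have fnY: "fn Y = fn X" using alpha_fn h by auto
  have "alpha (mapP (g \<circ> f) A) (mapP g B)" using alpha_mapP[OF f(4) bij_is_inj[OF g(1)]] by simp
  hence "alpha (mapP (g \<circ> f) A) C" using g(4) by (simp add: alpha.a_trans)
  moreover have "bij (g \<circ> f)" using f g by (simp add: bij_comp)
  ultimately show ?thesis using f g fnY PCase by (auto simp: ishape_def intro!: exI[of _ "g \<circ> f"])
next
  case (PPar A B)
  assume h: "ishape X Y" "ishape Y Z"
  then obtain A' B' where 1: "Y = PPar A' B'" "alpha A A'" "alpha B B'" using PPar by (auto simp: ishape_def)
  then obtain A'' B'' where 2: "Z = PPar A'' B''" "alpha A' A''" "alpha B' B''" using h by (auto simp: ishape_def)
  show ?thesis using 1 2 PPar by (auto simp: ishape_def intro: alpha.a_trans)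
next
  case (PRep A)
  assume h: "ishape X Y" "ishape Y Z"
  then obtain A' where 1: "Y = PRep A'" "alpha A A'" using PRep by (auto simp: ishape_def)
  then obtain A'' where 2: "Z = PRep A''" "alpha A' A''" using h by (auto simp: ishape_def)
  show ?thesis using 1 2 PRep by (auto simp: ishape_def intro: alpha.a_trans)
qed (auto simp: ishape_def)

lemma alpha_ishape: "alpha X Z \<Longrightarrow> wf_proc X \<Longrightarrow> ishape X Z"
proof (induct rule: alpha.induct)
  case (a_refl P) show ?case by (rule ishape_refl)
next
  case (a_sym P Q)
  have "wf_proc P" using a_sym alpha_wf by blast
  hence "ishape P Q" using a_sym by blast
  thus ?case using ishape_sym a_sym \<open>wf_proc P\<close> by blast
next
  case (a_trans P Q R)
  have "wf_proc Q" using a_trans alpha_wf by blast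
  thus ?case using ishape_trans a_trans by blast
next
  case (a_new P P' x) thus ?case
    by (auto simp: ishape_def intro!: exI[of _ id])
next
  case (a_case P P' p) thus ?case
    by (auto simp: ishape_def intro!: exI[of _ id])
next
  case (a_new_ren y x P)
  have "\<forall>z\<in>fn (PNew x P). swapn x y z = z" using a_new_ren by (auto simp: swapn_def)
  thus ?case by (auto simp: ishape_def swap_mapP alpha.a_refl intro!: exI[of _ "swapn x y"])
next
  case (a_case_ren x p y P)
  have "x \<notin> fn (PCase p P)" using a_case_ren by (auto simp: wf_pat_def)
  hence "\<forall>z\<in>fn (PCase p P). swapn x y z = z" using a_case_ren by (auto simp: swapn_def)
  thus ?case by (auto simp: ishape_def swap_mapP swapp_mapp alpha.a_refl intro!: exI[of _ "swapn x y"])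
qed (auto simp: ishape_def)

lemma alpha_PZero: "alpha PZero Z \<Longrightarrow> Z = PZero"
  using alpha_ishape[of PZero Z] by (simp add: ishape_def)
lemma alpha_PPar: "alpha (PPar A B) Z \<Longrightarrow> wf_proc (PPar A B) \<Longrightarrow>
  \<exists>A' B'. Z = PPar A' B' \<and> alpha A A' \<and> alpha B B'"
  using alpha_ishape[of "PPar A B" Z] by (simp add: ishape_def)
lemma alpha_PRep: "alpha (PRep A) Z \<Longrightarrow> wf_proc (PRep A) \<Longrightarrow> \<exists>A'. Z = PRep A' \<and> alpha A A'"
  using alpha_ishape[of "PRep A" Z] by (simp add: ishape_def)
lemma alpha_PNew: "alpha (PNew n A) Z \<Longrightarrow> wf_proc (PNew n A) \<Longrightarrow>
  \<exists>f B. bij f \<and> (\<forall>z\<in>fn (PNew n A). f z = z) \<and> Z = PNew (f n) B \<and> alpha (mapP f A) B"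
  using alpha_ishape[of "PNew n A" Z] by (simp add: ishape_def)
lemma alpha_PCase: "alpha (PCase p A) Z \<Longrightarrow> wf_proc (PCase p A) \<Longrightarrow>
  \<exists>f B. bij f \<and> (\<forall>z\<in>fn (PCase p A). f z = z) \<and> Z = PCase (mapp f p) B \<and> alpha (mapP f A) B"
  using alpha_ishape[of "PCase p A" Z] by (simp add: ishape_def)


lemma swaps_range: "swaps xs z = z \<or> swaps xs z \<in> fst ` set xs \<union> snd ` set xs"
  by (induct xs arbitrary: z rule: swaps.induct) (auto simp: swapn_def)

lemma swaps_image_fst: "distinct (map fst xs @ map snd xs) \<Longrightarrow> swaps xs ` (fst ` set xs) = snd ` set xs"
proof -
  assume d: "distinct (map fst xs @ map snd xs)"
  have "swaps xs ` (fst ` set xs) = (\<lambda>(a,c). swaps xs a) ` set xs" by (auto simp: image_iff; force)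
  also have "\<dots> = (\<lambda>(a,c). c) ` set xs" using swaps_pair[OF d] by (auto intro!: image_cong)
  also have "\<dots> = snd ` set xs" by (simp add: split_def)
  finally show ?thesis .
qed

lemma new_body:
  assumes f: "inj f" and wf: "wf_proc A" and fx: "\<forall>z\<in>fn (PNew n A). f z = z"
    and c: "c \<notin> names A" "c \<noteq> n" "c \<noteq> f n"
  shows "alpha (swap n c A) (swap (f n) c (mapP f A))"
proof -
  have cA: "c \<notin> fn A" using c fn_sub_names by auto
  define \<rho> where "\<rho> = swapn (f n) c \<circ> f \<circ> swapn n c"
  have injr: "inj \<rho>" unfolding \<rho>_def using f by (simp add: inj_compose)
  have fixr: "\<forall>w\<in>fn (swap n c A). \<rho> w = w"
  proof
    fix w assume "w \<in> fn (swap n c A)"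
    then obtain z where z: "z \<in> fn A" "w = swapn n c z" by (auto simp: swap_mapP)
    show "\<rho> w = w"
    proof (cases "z = n")
      case True thus ?thesis using z by (simp add: \<rho>_def)
    next
      case False
      have "z \<noteq> c" using z cA by auto
      hence wz: "w = z" using z False by simp
      have fz: "f z = z" using fx z False by auto
      have "z \<noteq> f n" using fz False f by (metis inj_eq)
      thus ?thesis using wz fz \<open>z \<noteq> c\<close> False by (simp add: \<rho>_def)
    qed
  qed
  have s2: "alpha (swap n c A) (mapP \<rho> (swap n c A))"
    using wf injr fixr by (intro GL) (auto simp: swap_mapP)
  have "\<rho> \<circ> swapn n c = swapn (f n) c \<circ> f" by (auto simp: \<rho>_def fun_eq_iff)
  hence "mapP \<rho> (swap n c A) = swap (f n) c (mapP f A)" by (simp add: swap_mapP)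
  thus ?thesis using s2 by simp
qed

lemma case_rename:
  assumes f: "inj f" and wf: "wf_proc (PCase p A)" and fx: "\<forall>z\<in>fn (PCase p A). f z = z"
    and cs: "length cs = length (bn_list p)" "distinct cs"
      "set cs \<inter> (names (PCase p A) \<union> f ` names (PCase p A)) = {}"
  defines "t1 \<equiv> swaps (zip (bn_list p) cs)" and "t2 \<equiv> swaps (zip (map f (bn_list p)) cs)"
  shows "mapp t1 p = mapp t2 (mapp f p)"
    and "alpha (mapP t1 A) (mapP t2 (mapP f A))"
    and "alpha (PCase p A) (PCase (mapp t1 p) (mapP t1 A))"
    and "alpha (PCase (mapp f p) (mapP f A)) (PCase (mapp t2 (mapp f p)) (mapP t2 (mapP f A)))"
    and "\<forall>z\<in>bn p \<union> fn (PCase p A). t2 (f z) = t1 z"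
    and "\<forall>z. z \<notin> bn p \<union> set cs \<longrightarrow> t1 z = z"
    and "\<forall>z. z \<notin> f ` bn p \<union> set cs \<longrightarrow> t2 z = z"
    and "bn (mapp t1 p) = set cs"
proof -
  define X where "X = PCase p A"
  have wfp: "wf_pat p" and wfA: "wf_proc A" using wf by auto
  define bs where "bs = bn_list p"
  define xs1 where "xs1 = zip bs cs"
  define xs2 where "xs2 = zip (map f bs) cs"
  have t1: "t1 = swaps xs1" by (simp add: t1_def xs1_def bs_def)
  have t2: "t2 = swaps xs2" by (simp add: t2_def xs2_def bs_def)
  have cs': "length cs = length bs" "distinct cs" "set cs \<inter> (names X \<union> f ` names X) = {}"
    using cs by (auto simp: bs_def X_def)
  have dbs: "distinct bs" using wfp by (simp add: wf_pat_def bs_def)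
  have bsX: "set bs \<subseteq> names X" by (simp add: bs_def X_def bn_def[symmetric] pnames_eq) blast
  have m1: "map fst xs1 = bs" "map snd xs1 = cs" using cs' by (auto simp: xs1_def)
  have m2: "map fst xs2 = map f bs" "map snd xs2 = cs" using cs' by (auto simp: xs2_def)
  have f1: "fst ` set xs1 = set bs" "snd ` set xs1 = set cs" by (metis list.set_map m1)+
  have f2: "fst ` set xs2 = f ` set bs" "snd ` set xs2 = set cs" by (metis list.set_map m2 list.set_map)+
  have d1: "distinct (map fst xs1 @ map snd xs1)" using m1 dbs cs' bsX by auto
  have d2: "distinct (map fst xs2 @ map snd xs2)" using m2 dbs cs' bsX f
    by (auto simp: distinct_map inj_on_subset[of f UNIV])
  show key: "\<forall>z\<in>bn p \<union> fn (PCase p A). t2 (f z) = t1 z"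
  proof
    fix z assume z: "z \<in> bn p \<union> fn (PCase p A)"
    show "t2 (f z) = t1 z"
    proof (cases "z \<in> bn p")
      case True
      hence "z \<in> set bs" by (simp add: bs_def bn_def)
      then obtain i where i: "i < length bs" "bs ! i = z" by (metis in_set_conv_nth)
      have "zip bs cs ! i \<in> set (zip bs cs)" by (rule nth_mem) (use i cs' in simp)
      moreover have "zip bs cs ! i = (z, cs ! i)" using i cs' by simp
      ultimately have "(z, cs ! i) \<in> set xs1" by (simp add: xs1_def)
      hence e1: "t1 z = cs ! i" unfolding t1 using d1 by (rule swaps_pair[rotated])
      have "zip (map f bs) cs ! i \<in> set (zip (map f bs) cs)" by (rule nth_mem) (use i cs' in simp)
      moreover have "zip (map f bs) cs ! i = (f z, cs ! i)" using i cs' by simp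
      ultimately have "(f z, cs ! i) \<in> set xs2" by (simp add: xs2_def)
      hence "t2 (f z) = cs ! i" unfolding t2 using d2 by (rule swaps_pair[rotated])
      thus ?thesis using e1 by simp
    next
      case False
      hence zX: "z \<in> fn X" using z by (auto simp: X_def)
      hence fz: "f z = z" using fx by (auto simp: X_def)
      have zn: "z \<in> names X" using zX fn_sub_names by auto
      have "z \<notin> set bs" using False by (simp add: bs_def bn_def)
      have "z \<notin> set cs" using cs' zn by auto
      hence "t1 z = z" unfolding t1 using \<open>z \<notin> set bs\<close> f1 by (intro swaps_other) auto
      moreover have "z \<notin> f ` set bs"
      proof
        assume "z \<in> f ` set bs"
        then obtain b where "b \<in> set bs" "z = f b" by auto
        hence "b = z" using fz f by (metis inj_eq)
        thus False using \<open>b \<in> set bs\<close> \<open>z \<notin> set bs\<close> by simp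
      qed
      hence "t2 z = z" unfolding t2 using \<open>z \<notin> set cs\<close> f2 by (intro swaps_other) auto
      ultimately show ?thesis using fz by simp
    qed
  qed
  show o1: "\<forall>z. z \<notin> bn p \<union> set cs \<longrightarrow> t1 z = z"
    unfolding t1 using f1 by (auto intro!: swaps_other simp: bs_def bn_def)
  show o2: "\<forall>z. z \<notin> f ` bn p \<union> set cs \<longrightarrow> t2 z = z"
    unfolding t2 using f2 by (auto intro!: swaps_other simp: bs_def bn_def)
  show "bn (mapp t1 p) = set cs"
    using swaps_image_fst[OF d1] f1 by (simp add: t1 bs_def bn_def)
  have a: "distinct (map fst xs1 @ map snd xs1)" by (rule d1)
  have b: "fst ` set xs1 \<subseteq> bn p" using f1 by (simp add: bs_def bn_def)
  have c: "snd ` set xs1 \<inter> names (PCase p A) = {}" using f1 cs' by (auto simp: X_def)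
  show "alpha (PCase p A) (PCase (mapp t1 p) (mapP t1 A))" using RC[OF a b c] t1 by simp
  have a: "distinct (map fst xs2 @ map snd xs2)" by (rule d2)
  have b: "fst ` set xs2 \<subseteq> bn (mapp f p)" using f2 by (simp add: bs_def bn_def)
  have c: "snd ` set xs2 \<inter> names (PCase (mapp f p) (mapP f A)) = {}"
    using f2 cs' by (auto simp: X_def)
  show "alpha (PCase (mapp f p) (mapP f A)) (PCase (mapp t2 (mapp f p)) (mapP t2 (mapP f A)))"
    using RC[OF a b c] t2 by simp
  show h3: "mapp t1 p = mapp t2 (mapp f p)"
    using key by (simp, intro mapp_cong) (auto simp: pnames_eq)
  have bijt1: "bij t1" by (simp add: t1)
  define g where "g = t2 \<circ> f \<circ> inv t1"
  have injg: "inj g" unfolding g_def using f bijt1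
    by (simp add: inj_compose bij_imp_bij_inv bij_is_inj t2)
  have gt: "g \<circ> t1 = t2 \<circ> f" unfolding g_def using bijt1
    by (simp add: fun_eq_iff bij_is_inj)
  have fixg: "\<forall>w\<in>fn (mapP t1 A). g w = w"
  proof
    fix w assume "w \<in> fn (mapP t1 A)"
    then obtain z where z: "z \<in> fn A" "w = t1 z" using bijt1 by (auto simp: bij_is_inj)
    have "z \<in> bn p \<union> fn (PCase p A)" using z by auto
    hence "t2 (f z) = t1 z" using key by blast
    thus "g w = w" using z gt by (metis comp_apply)
  qed
  have "alpha (mapP t1 A) (mapP g (mapP t1 A))"
    using injg fixg wfA bijt1 by (intro GL) (auto simp: bij_is_inj)
  thus "alpha (mapP t1 A) (mapP t2 (mapP f A))" using gt by simp
qed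


lemma rename_fresh: "finite S \<Longrightarrow> wf_proc P \<Longrightarrow> \<exists>P0. alpha P P0 \<and> bnames P0 \<inter> S = {}"
proof (induct P arbitrary: S)
  case PZero thus ?case by (auto intro: alpha.a_refl)
next
  case (PPar A B)
  obtain A0 where A0: "alpha A A0" "bnames A0 \<inter> S = {}" using PPar.hyps(1)[of S] PPar.prems by auto
  obtain B0 where B0: "alpha B B0" "bnames B0 \<inter> S = {}" using PPar.hyps(2)[of S] PPar.prems by auto
  show ?case using A0 B0 by (auto intro!: exI[of _ "PPar A0 B0"] alpha.a_par)
next
  case (PRep A)
  obtain A0 where A0: "alpha A A0" "bnames A0 \<inter> S = {}" using PRep.hyps(1)[of S] PRep.prems by auto
  show ?case using A0 by (auto intro!: exI[of _ "PRep A0"] alpha.a_rep)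
next
  case (PNew n A)
  obtain c where c: "c \<notin> S \<union> names A \<union> {n}" using fresh_name[of "S \<union> names A \<union> {n}"] PNew by auto
  obtain A0 where A0: "alpha A A0" "bnames A0 \<inter> (S \<union> {n, c}) = {}" using PNew.hyps(1)[of "S \<union> {n,c}"] PNew.prems by auto
  have fnA0: "fn A0 = fn A" using alpha_fn A0 PNew by auto
  have "c \<notin> fn (PNew n A0)" using c fnA0 fn_sub_names by auto
  hence 1: "alpha (PNew n A0) (PNew c (swap n c A0))" by (rule alpha.a_new_ren)
  have "swap n c A0 = mapP (swapn n c) A0" by (simp add: swap_mapP)
  have "bnames (swap n c A0) = bnames A0"
    using A0 by (auto simp: swap_mapP swapn_def image_iff)
  hence "bnames (PNew c (swap n c A0)) \<inter> S = {}" using A0 c by auto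
  moreover have "alpha (PNew n A) (PNew c (swap n c A0))"
    using 1 A0 by (meson alpha.a_new alpha.a_trans)
  ultimately show ?case by blast
next
  case (PCase p A)
  have wfp: "wf_pat p" using PCase by simp
  obtain cs where cs: "length cs = length (bn_list p)" "distinct cs"
      "set cs \<inter> (S \<union> names (PCase p A)) = {}"
    using fresh_list[of "S \<union> names (PCase p A)" "length (bn_list p)"] PCase by auto
  obtain A0 where A0: "alpha A A0" "bnames A0 \<inter> (S \<union> bn p \<union> set cs) = {}"
    using PCase.hyps(1)[of "S \<union> bn p \<union> set cs"] PCase.prems by (auto simp: bn_def)
  have fnA0: "fn A0 = fn A" using alpha_fn A0 PCase by auto
  have wf0: "wf_proc (PCase p A0)" using PCase alpha_wf A0 by auto
  have n0: "set cs \<inter> (names (PCase p A0) \<union> id ` names (PCase p A0)) = {}"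
  proof -
    have "names A0 \<subseteq> fn A \<union> bnames A0" using names_sub fnA0 by auto
    moreover have "fn A \<subseteq> names A" by (rule fn_sub_names)
    ultimately show ?thesis using cs A0 by auto
  qed
  note cr = case_rename[of id p A0 cs, OF _ wf0 _ cs(1,2) n0]
  define t1 where "t1 = swaps (zip (bn_list p) cs)"
  have 1: "alpha (PCase p A0) (PCase (mapp t1 p) (mapP t1 A0))" using cr(3) by (simp add: t1_def)
  have 2: "bn (mapp t1 p) = set cs" using cr(8) by (simp add: t1_def)
  have 3: "bnames (mapP t1 A0) = bnames A0"
  proof -
    have "\<forall>z\<in>bnames A0. t1 z = z" using cr(6) A0 by (auto simp: t1_def)
    thus ?thesis by simp
  qed
  have "bnames (PCase (mapp t1 p) (mapP t1 A0)) \<inter> S = {}" using 2 3 cs A0 by auto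
  moreover have "alpha (PCase p A) (PCase (mapp t1 p) (mapP t1 A0))"
    using 1 A0 by (meson alpha.a_case alpha.a_trans)
  ultimately show ?case by blast
qed


definition comr :: "subst \<Rightarrow> bool" where
  "comr \<sigma> \<longleftrightarrow> (\<forall>q\<in>ran \<sigma>. communicable q)"

lemma is_subst_comr: "is_subst \<sigma> \<Longrightarrow> comr \<sigma>" by (simp add: is_subst_def comr_def)

lemma comm_bn_list: "communicable q \<Longrightarrow> bn_list q = []" by (induct q) auto
lemma comm_bn: "communicable q \<Longrightarrow> bn q = {}" by (simp add: bn_def comm_bn_list)
lemma comm_pnames: "communicable q \<Longrightarrow> pnames q = fnp q" by (simp add: pnames_eq comm_bn)
lemma protect_bn_list: "communicable q \<Longrightarrow> bn_list (protect q) = []" by (induct q) auto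
lemma protect_fnp: "communicable q \<Longrightarrow> fnp (protect q) = fnp q" by (induct q) auto
lemma protect_pnames: "communicable q \<Longrightarrow> pnames (protect q) = pnames q" by (induct q) auto
lemma protect_psz: "communicable q \<Longrightarrow> psz (protect q) = psz q" by (induct q) auto
lemma protect_mapp: "communicable q \<Longrightarrow> mapp g (protect q) = protect (mapp g q)" by (induct q) auto

lemma ranI: "\<sigma> x = Some q \<Longrightarrow> q \<in> ran \<sigma>" by (auto simp: ran_def)
lemma ran_names_I: "\<sigma> x = Some q \<Longrightarrow> pnames q \<subseteq> ran_names \<sigma>"
  by (auto simp: ran_names_def pnames_eq dest: ranI)
lemma comr_D: "comr \<sigma> \<Longrightarrow> \<sigma> x = Some q \<Longrightarrow> communicable q"
  by (auto simp: comr_def dest: ranI)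

lemma finite_fnp[simp]: "finite (fnp q)" by (metis finite_Un finite_pnames pnames_eq)
lemma finite_bn[simp]: "finite (bn q)" by (simp add: bn_def)
lemma finite_ran_names: "is_subst \<sigma> \<Longrightarrow> finite (ran_names \<sigma>)"
  unfolding ran_names_def is_subst_def by (auto intro!: finite_ran)

lemma bn_list_psubst[simp]: "comr \<sigma> \<Longrightarrow> bn_list (psubst \<sigma> p) = bn_list p"
  by (induct p) (auto split: option.split simp: comm_bn_list protect_bn_list dest: comr_D)
lemma bn_psubst[simp]: "comr \<sigma> \<Longrightarrow> bn (psubst \<sigma> p) = bn p" by (simp add: bn_def)

lemma ran_names_mem: "\<sigma> x = Some q \<Longrightarrow> z \<in> pnames q \<Longrightarrow> z \<in> ran_names \<sigma>"
  using ran_names_I by blast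
lemma fnp_sub_pnames: "fnp q \<subseteq> pnames q" by (simp add: pnames_eq)

lemma pnames_psubst: "comr \<sigma> \<Longrightarrow> pnames (psubst \<sigma> p) \<subseteq> pnames p \<union> ran_names \<sigma>"
proof (induct p)
  case (PVar x) show ?case
  proof (cases "\<sigma> x")
    case (Some q) thus ?thesis using ran_names_I[of \<sigma> x q, OF Some] by auto
  qed auto
next
  case (PProt x) show ?case
  proof (cases "\<sigma> x")
    case (Some q) thus ?thesis using ran_names_I[of \<sigma> x q, OF Some] comr_D[OF PProt Some]
      by (auto simp: protect_pnames)
  qed auto
qed auto

lemma fnp_psubst: "comr \<sigma> \<Longrightarrow> fnp (psubst \<sigma> p) \<subseteq> (fnp p - dom \<sigma>) \<union> ran_names \<sigma>"
proof (induct p)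
  case (PVar x) show ?case
  proof (cases "\<sigma> x")
    case (Some q) thus ?thesis using ran_names_I[of \<sigma> x q, OF Some] fnp_sub_pnames[of q] by auto
  qed auto
next
  case (PProt x) show ?case
  proof (cases "\<sigma> x")
    case (Some q) thus ?thesis using ran_names_I[of \<sigma> x q, OF Some] comr_D[OF PProt Some] fnp_sub_pnames[of q]
      by (auto simp: protect_fnp)
  qed auto
qed auto

lemma psz_psubst: "comr \<sigma> \<Longrightarrow> K \<ge> 1 \<Longrightarrow> (\<forall>q\<in>ran \<sigma>. psz q \<le> K) \<Longrightarrow> psz (psubst \<sigma> p) \<le> K * psz p"
proof (induct p)
  case (PComp p q) thus ?case by (auto simp: algebra_simps)
next
  case (PProt x) show ?case
  proof (cases "\<sigma> x")
    case (Some q) thus ?thesis using PProt comr_D[OF PProt(1) Some] ranI[of \<sigma> x q, OF Some]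
      by (auto simp: protect_psz)
  qed (use PProt in auto)
next
  case (PVar x) show ?case
  proof (cases "\<sigma> x")
    case (Some q) thus ?thesis using PVar ranI[of \<sigma> x q, OF Some] by auto
  qed (use PVar in auto)
qed auto

lemma psubst_ident: "dom \<sigma> \<inter> pnames p = {} \<Longrightarrow> psubst \<sigma> p = p"
  by (induct p) (auto split: option.split)

lemma psubst_mapp: "comr \<sigma> \<Longrightarrow> inj g \<Longrightarrow> (\<forall>z\<in>dom \<sigma> \<union> ran_names \<sigma>. g z = z) \<Longrightarrow>
  psubst \<sigma> (mapp g p) = mapp g (psubst \<sigma> p)"
proof (induct p)
  case (PVar x)
  show ?case
  proof (cases "\<sigma> x")
    case None
    have "\<sigma> (g x) = None"
    proof (rule ccontr)
      assume "\<sigma> (g x) \<noteq> None"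
      hence "g x \<in> dom \<sigma>" by auto
      hence "g (g x) = g x" using PVar by auto
      hence "g x = x" using PVar(2) by (simp add: inj_eq)
      thus False using None \<open>\<sigma> (g x) \<noteq> None\<close> by simp
    qed
    thus ?thesis using None by simp
  next
    case (Some q)
    hence "g x = x" using PVar(3) by auto
    moreover have "mapp g q = q" using PVar(3) ran_names_I[of \<sigma> x q, OF Some] by (intro mapp_ident) auto
    ultimately show ?thesis using Some by simp
  qed
next
  case (PProt x)
  show ?case
  proof (cases "\<sigma> x")
    case None
    have "\<sigma> (g x) = None"
    proof (rule ccontr)
      assume "\<sigma> (g x) \<noteq> None"
      hence "g x \<in> dom \<sigma>" by auto
      hence "g (g x) = g x" using PProt by auto
      hence "g x = x" using PProt(2) by (simp add: inj_eq)
      thus False using None \<open>\<sigma> (g x) \<noteq> None\<close> by simp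
    qed
    thus ?thesis using None by simp
  next
    case (Some q)
    hence "g x = x" using PProt(3) by auto
    moreover have "mapp g q = q" using PProt(3) ran_names_I[of \<sigma> x q, OF Some] by (intro mapp_ident) auto
    moreover have "communicable q" using comr_D[OF PProt(1) Some] .
    ultimately show ?thesis using Some by (simp add: protect_mapp)
  qed
qed auto

lemma nsubst_mapP: "comr \<sigma> \<Longrightarrow> inj g \<Longrightarrow> (\<forall>z\<in>dom \<sigma> \<union> ran_names \<sigma>. g z = z) \<Longrightarrow>
  nsubst \<sigma> (mapP g P) = mapP g (nsubst \<sigma> P)"
  by (induct P) (auto simp: psubst_mapp)

lemma nsubst_ident: "dom \<sigma> \<inter> names P = {} \<Longrightarrow> nsubst \<sigma> P = P"
proof (induct P)
  case (PCase p P)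
  have "psubst \<sigma> p = p" using PCase(2) by (intro psubst_ident) auto
  thus ?case using PCase by auto
qed auto

lemma bnames_nsubst[simp]: "comr \<sigma> \<Longrightarrow> bnames (nsubst \<sigma> P) = bnames P" by (induct P) auto

lemma names_nsubst: "comr \<sigma> \<Longrightarrow> names (nsubst \<sigma> P) \<subseteq> names P \<union> ran_names \<sigma>"
proof (induct P)
  case (PCase p P) thus ?case using pnames_psubst[OF PCase(2), of p] by auto
qed auto

lemma fn_nsubst: "comr \<sigma> \<Longrightarrow> fn (nsubst \<sigma> P) \<subseteq> (fn P - dom \<sigma>) \<union> ran_names \<sigma>"
proof (induct P)
  case (PCase p P)
  thus ?case using fnp_psubst[OF PCase(2), of p] by auto
qed auto

lemma sz_nsubst: "comr \<sigma> \<Longrightarrow> K \<ge> 1 \<Longrightarrow> (\<forall>q\<in>ran \<sigma>. psz q \<le> K) \<Longrightarrow> sz (nsubst \<sigma> P) \<le> K * sz P"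
proof (induct P)
  case (PCase p P)
  have "psz (psubst \<sigma> p) \<le> K * psz p" using psz_psubst PCase by blast
  thus ?case using PCase by (auto simp: algebra_simps)
qed (auto simp: algebra_simps)

lemma wf_psubst: "comr \<sigma> \<Longrightarrow> wf_pat p \<Longrightarrow> bn p \<inter> ran_names \<sigma> = {} \<Longrightarrow> wf_pat (psubst \<sigma> p)"
  using fnp_psubst[of \<sigma> p] by (auto simp: wf_pat_def)

lemma wf_nsubst: "comr \<sigma> \<Longrightarrow> wf_proc P \<Longrightarrow> bnames P \<inter> ran_names \<sigma> = {} \<Longrightarrow> wf_proc (nsubst \<sigma> P)"
proof (induct P)
  case (PCase p P)
  have "wf_pat (psubst \<sigma> p)" using PCase by (intro wf_psubst) auto
  thus ?case using PCase by auto
qed auto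


lemma L6core:
  assumes "alpha P0 P1" "wf_proc P0" "comr \<sigma>" "finite S" "dom \<sigma> \<union> ran_names \<sigma> \<subseteq> S"
    "bnames P0 \<inter> S = {}" "bnames P1 \<inter> S = {}"
  shows "alpha (nsubst \<sigma> P0) (nsubst \<sigma> P1)"
  using assms
proof (induct "sz P0" arbitrary: P0 P1 rule: less_induct)
  case (less P0 P1)
  note al = less(2) and wf0 = less(3) and cm = less(4) and fS = less(5) and dS = less(6)
    and b0 = less(7) and b1 = less(8)
  have wf1: "wf_proc P1" using al wf0 alpha_wf by blast
  have fixS: "\<And>g. (\<And>z. z \<in> S \<Longrightarrow> g z = z) \<Longrightarrow> \<forall>z\<in>dom \<sigma> \<union> ran_names \<sigma>. g z = z"
    using dS by blast
  show ?case
  proof (cases P0)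
    case PZero
    hence "P1 = PZero" using al alpha_PZero by blast
    thus ?thesis using PZero by (simp add: alpha.a_refl)
  next
    case (PPar A B)
    obtain A' B' where 1: "P1 = PPar A' B'" "alpha A A'" "alpha B B'" using alpha_PPar al wf0 PPar by blast
    have "alpha (nsubst \<sigma> A) (nsubst \<sigma> A')" using 1 less PPar by (intro less(1)) auto
    moreover have "alpha (nsubst \<sigma> B) (nsubst \<sigma> B')" using 1 less PPar by (intro less(1)) auto
    ultimately show ?thesis using 1 PPar by (simp add: alpha.a_par)
  next
    case (PRep A)
    obtain A' where 1: "P1 = PRep A'" "alpha A A'" using alpha_PRep al wf0 PRep by blast
    have "alpha (nsubst \<sigma> A) (nsubst \<sigma> A')" using 1 less PRep by (intro less(1)) auto
    thus ?thesis using 1 PRep by (simp add: alpha.a_rep)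
  next
    case (PNew n A)
    obtain f B where fB: "bij f" "\<forall>z\<in>fn (PNew n A). f z = z" "P1 = PNew (f n) B" "alpha (mapP f A) B"
      using alpha_PNew al wf0 PNew by blast
    have injf: "inj f" using fB bij_is_inj by auto
    obtain c where c: "c \<notin> S \<union> names A \<union> names B \<union> {n, f n} \<union> names (nsubst \<sigma> A) \<union> names (nsubst \<sigma> B)"
      using fresh_name[of "S \<union> names A \<union> names B \<union> {n, f n} \<union> names (nsubst \<sigma> A) \<union> names (nsubst \<sigma> B)"] fS
      by auto
    have wfA: "wf_proc A" using wf0 PNew by simp
    have "alpha (swap n c A) (swap (f n) c (mapP f A))"
      using new_body[OF injf wfA] fB c by auto
    moreover have "alpha (swap (f n) c (mapP f A)) (swap (f n) c B)"
      using alpha_mapP[OF fB(4), of "swapn (f n) c"] by (simp add: swap_mapP)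
    ultimately have body: "alpha (swap n c A) (swap (f n) c B)" by (rule alpha.a_trans)
    have nS: "n \<notin> S" "f n \<notin> S" "c \<notin> S" using b0 b1 PNew fB c by auto
    have bA: "bnames (swap n c A) \<inter> S = {}"
    proof -
      have "bnames A \<inter> S = {}" using b0 PNew by auto
      thus ?thesis using nS by (auto simp: swap_mapP swapn_def)
    qed
    have bB: "bnames (swap (f n) c B) \<inter> S = {}"
    proof -
      have "bnames B \<inter> S = {}" using b1 fB by auto
      thus ?thesis using nS by (auto simp: swap_mapP swapn_def)
    qed
    have IH: "alpha (nsubst \<sigma> (swap n c A)) (nsubst \<sigma> (swap (f n) c B))"
      using body bA bB wfA cm fS dS PNew by (intro less(1)) (auto simp: swap_mapP)
    have cmA: "nsubst \<sigma> (swap n c A) = swap n c (nsubst \<sigma> A)"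
      unfolding swap_mapP by (rule nsubst_mapP[OF cm inj_swapn fixS]) (use nS in \<open>auto simp: swapn_def\<close>)
    have cmB: "nsubst \<sigma> (swap (f n) c B) = swap (f n) c (nsubst \<sigma> B)"
      unfolding swap_mapP by (rule nsubst_mapP[OF cm inj_swapn fixS]) (use nS in \<open>auto simp: swapn_def\<close>)
    have 1: "alpha (PNew n (nsubst \<sigma> A)) (PNew c (swap n c (nsubst \<sigma> A)))"
      by (rule alpha.a_new_ren) (use c fn_sub_names in auto)
    have 2: "alpha (PNew (f n) (nsubst \<sigma> B)) (PNew c (swap (f n) c (nsubst \<sigma> B)))"
      by (rule alpha.a_new_ren) (use c fn_sub_names in auto)
    have 3: "alpha (PNew c (swap n c (nsubst \<sigma> A))) (PNew c (swap (f n) c (nsubst \<sigma> B)))"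
      using IH cmA cmB by (simp add: alpha.a_new)
    show ?thesis using 1 2 3 PNew fB by (simp, meson alpha.a_sym alpha.a_trans)
  next
    case (PCase p A)
    obtain f B where fB: "bij f" "\<forall>z\<in>fn (PCase p A). f z = z" "P1 = PCase (mapp f p) B" "alpha (mapP f A) B"
      using alpha_PCase al wf0 PCase by blast
    have injf: "inj f" using fB bij_is_inj by auto
    define N where "N = S \<union> names P0 \<union> names P1 \<union> f ` names P0 \<union> names (nsubst \<sigma> P0) \<union> names (nsubst \<sigma> P1)"
    have fN: "finite N" using fS by (simp add: N_def)
    obtain cs where cs: "length cs = length (bn_list p)" "distinct cs" "set cs \<inter> N = {}"
      using fresh_list[OF fN] by blast
    have wfP: "wf_proc (PCase p A)" using wf0 PCase by simp
    have csn: "set cs \<inter> (names (PCase p A) \<union> f ` names (PCase p A)) = {}"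
      using cs PCase by (auto simp: N_def)
    note cr = case_rename[OF injf wfP fB(2) cs(1,2) csn]
    define t1 where "t1 = swaps (zip (bn_list p) cs)"
    define t2 where "t2 = swaps (zip (map f (bn_list p)) cs)"
    have body: "alpha (mapP t1 A) (mapP t2 B)"
    proof -
      have "alpha (mapP t2 (mapP f A)) (mapP t2 B)" using alpha_mapP[OF fB(4), of t2] by (simp add: t2_def)
      thus ?thesis using cr(2) by (simp add: t1_def t2_def) (metis alpha.a_trans mapP_comp)
    qed
    have bpS: "bn p \<inter> S = {}" using b0 PCase by auto
    have bfpS: "f ` bn p \<inter> S = {}" using b1 fB by auto
    have csS: "set cs \<inter> S = {}" using cs by (auto simp: N_def)
    have t1S: "\<And>z. z \<in> S \<Longrightarrow> t1 z = z" using cr(6) bpS csS by (auto simp: t1_def)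
    have t2S: "\<And>z. z \<in> S \<Longrightarrow> t2 z = z" using cr(7) bfpS csS by (auto simp: t2_def)
    have bA: "bnames (mapP t1 A) \<inter> S = {}"
    proof -
      have "bnames A \<inter> S = {}" using b0 PCase by auto
      moreover have "\<And>w. t1 w \<noteq> w \<Longrightarrow> t1 w \<notin> S"
        by (metis t1S bij_swaps bij_is_inj inj_eq t1_def)
      ultimately show ?thesis by auto (metis disjoint_iff)
    qed
    have bB: "bnames (mapP t2 B) \<inter> S = {}"
    proof -
      have "bnames B \<inter> S = {}" using b1 fB by auto
      moreover have "\<And>w. t2 w \<noteq> w \<Longrightarrow> t2 w \<notin> S"
        by (metis t2S bij_swaps bij_is_inj inj_eq t2_def)
      ultimately show ?thesis by auto (metis disjoint_iff)
    qed
    have wfA: "wf_proc (mapP t1 A)" using wfP by (simp add: t1_def)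
    have IH: "alpha (nsubst \<sigma> (mapP t1 A)) (nsubst \<sigma> (mapP t2 B))"
      using body bA bB wfA cm fS dS PCase by (intro less(1)) auto
    have c1: "nsubst \<sigma> (mapP t1 A) = mapP t1 (nsubst \<sigma> A)"
      by (rule nsubst_mapP[OF cm _ fixS]) (auto simp: t1_def t1S[unfolded t1_def])
    have c2: "nsubst \<sigma> (mapP t2 B) = mapP t2 (nsubst \<sigma> B)"
      by (rule nsubst_mapP[OF cm _ fixS]) (auto simp: t2_def t2S[unfolded t2_def])
    have p1: "psubst \<sigma> (mapp t1 p) = mapp t1 (psubst \<sigma> p)"
      by (rule psubst_mapp[OF cm _ fixS]) (auto simp: t1_def t1S[unfolded t1_def])
    have p2: "psubst \<sigma> (mapp t2 (mapp f p)) = mapp t2 (psubst \<sigma> (mapp f p))"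
      by (rule psubst_mapp[OF cm _ fixS]) (auto simp: t2_def t2S[unfolded t2_def])
    have wfs0: "wf_proc (PCase (psubst \<sigma> p) (nsubst \<sigma> A))"
    proof -
      have "bnames P0 \<inter> ran_names \<sigma> = {}" using b0 dS by blast
      from wf_nsubst[OF cm wf0 this] show ?thesis using PCase by simp
    qed
    have wfs1: "wf_proc (PCase (psubst \<sigma> (mapp f p)) (nsubst \<sigma> B))"
    proof -
      have "bnames P1 \<inter> ran_names \<sigma> = {}" using b1 dS by blast
      from wf_nsubst[OF cm wf1 this] show ?thesis using fB by simp
    qed
    have cs0: "set cs \<inter> (names (PCase (psubst \<sigma> p) (nsubst \<sigma> A)) \<union> id ` names (PCase (psubst \<sigma> p) (nsubst \<sigma> A))) = {}"
      using cs PCase by (auto simp: N_def)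
    have cs1: "set cs \<inter> (names (PCase (psubst \<sigma> (mapp f p)) (nsubst \<sigma> B)) \<union> id ` names (PCase (psubst \<sigma> (mapp f p)) (nsubst \<sigma> B))) = {}"
      using cs fB by (auto simp: N_def)
    have len0: "length cs = length (bn_list (psubst \<sigma> p))" using cs cm by simp
    have len1: "length cs = length (bn_list (psubst \<sigma> (mapp f p)))" using cs cm by simp
    have r0: "alpha (nsubst \<sigma> P0) (PCase (mapp t1 (psubst \<sigma> p)) (mapP t1 (nsubst \<sigma> A)))"
      using case_rename(3)[OF inj_on_id wfs0 _ len0 cs(2) cs0] PCase cm by (simp add: t1_def)
    have r1: "alpha (nsubst \<sigma> P1) (PCase (mapp t2 (psubst \<sigma> (mapp f p))) (mapP t2 (nsubst \<sigma> B)))"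
      using case_rename(3)[OF inj_on_id wfs1 _ len1 cs(2) cs1] fB cm by (simp add: t2_def)
    have eqp: "mapp t1 p = mapp t2 (mapp f p)" using cr(1) by (simp add: t1_def t2_def)
    have "alpha (PCase (mapp t1 (psubst \<sigma> p)) (mapP t1 (nsubst \<sigma> A)))
                (PCase (mapp t2 (psubst \<sigma> (mapp f p))) (mapP t2 (nsubst \<sigma> B)))"
      using IH c1 c2 p1 p2 eqp by (metis alpha.a_case)
    thus ?thesis using r0 r1 by (meson alpha.a_sym alpha.a_trans)
  qed
qed


abbreviation SS :: "subst \<Rightarrow> name set" where "SS \<sigma> \<equiv> dom \<sigma> \<union> ran_names \<sigma>"

lemma finite_SS: "is_subst \<sigma> \<Longrightarrow> finite (SS \<sigma>)"
  using finite_ran_names by (auto simp: is_subst_def)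

lemma csubst_exists: "is_subst \<sigma> \<Longrightarrow> wf_proc P \<Longrightarrow> \<exists>Z. csubst \<sigma> P Z"
  using rename_fresh[OF finite_SS] by (fastforce simp: csubst_def)

lemma csubst_unique: "csubst \<sigma> P Z1 \<Longrightarrow> csubst \<sigma> P Z2 \<Longrightarrow> wf_proc P \<Longrightarrow> is_subst \<sigma> \<Longrightarrow> alpha Z1 Z2"
proof -
  assume a: "csubst \<sigma> P Z1" "csubst \<sigma> P Z2" "wf_proc P" "is_subst \<sigma>"
  then obtain P0 P1 where p: "alpha P P0" "bnames P0 \<inter> SS \<sigma> = {}" "Z1 = nsubst \<sigma> P0"
    "alpha P P1" "bnames P1 \<inter> SS \<sigma> = {}" "Z2 = nsubst \<sigma> P1" by (auto simp: csubst_def)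
  have "alpha P0 P1" using p by (meson alpha.a_sym alpha.a_trans)
  moreover have "wf_proc P0" using p a alpha_wf by blast
  ultimately show ?thesis using L6core[of P0 P1 \<sigma> "SS \<sigma>"] p a finite_SS is_subst_comr by auto
qed

lemma csubst_alpha: "alpha P Q \<Longrightarrow> csubst \<sigma> Q Z \<Longrightarrow> csubst \<sigma> P Z"
  by (auto simp: csubst_def intro: alpha.a_trans)

lemma csubst_intro: "alpha P P0 \<Longrightarrow> bnames P0 \<inter> SS \<sigma> = {} \<Longrightarrow> csubst \<sigma> P (nsubst \<sigma> P0)"
  by (auto simp: csubst_def)

lemma csubst_sz: "csubst \<sigma> P Z \<Longrightarrow> comr \<sigma> \<Longrightarrow> K \<ge> 1 \<Longrightarrow> (\<forall>q\<in>ran \<sigma>. psz q \<le> K) \<Longrightarrow> sz Z \<le> K * sz P"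
proof -
  assume a: "csubst \<sigma> P Z" "comr \<sigma>" "K \<ge> 1" "\<forall>q\<in>ran \<sigma>. psz q \<le> K"
  then obtain P0 where p: "alpha P P0" "Z = nsubst \<sigma> P0" by (auto simp: csubst_def)
  have "sz P0 = sz P" using alpha_sz p by auto
  thus ?thesis using sz_nsubst[OF a(2-4), of P0] p by simp
qed

lemma csubst_fn: "csubst \<sigma> P Z \<Longrightarrow> wf_proc P \<Longrightarrow> comr \<sigma> \<Longrightarrow> fn Z \<subseteq> (fn P - dom \<sigma>) \<union> ran_names \<sigma>"
proof -
  assume a: "csubst \<sigma> P Z" "wf_proc P" "comr \<sigma>"
  then obtain P0 where p: "alpha P P0" "Z = nsubst \<sigma> P0" by (auto simp: csubst_def)
  have "fn P0 = fn P" using alpha_fn p a by auto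
  thus ?thesis using fn_nsubst[OF a(3), of P0] p by auto
qed

lemma csubst_wf: "csubst \<sigma> P Z \<Longrightarrow> wf_proc P \<Longrightarrow> comr \<sigma> \<Longrightarrow> wf_proc Z"
proof -
  assume a: "csubst \<sigma> P Z" "wf_proc P" "comr \<sigma>"
  then obtain P0 where p: "alpha P P0" "Z = nsubst \<sigma> P0" "bnames P0 \<inter> SS \<sigma> = {}" by (auto simp: csubst_def)
  have "wf_proc P0" using alpha_wf p a by blast
  thus ?thesis using wf_nsubst[OF a(3)] p by auto
qed

lemma csubst_ident: "csubst \<sigma> P Z \<Longrightarrow> wf_proc P \<Longrightarrow> dom \<sigma> \<inter> fn P = {} \<Longrightarrow> alpha P Z"
proof -
  assume a: "csubst \<sigma> P Z" "wf_proc P" "dom \<sigma> \<inter> fn P = {}"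
  then obtain P0 where p: "alpha P P0" "Z = nsubst \<sigma> P0" "bnames P0 \<inter> SS \<sigma> = {}" by (auto simp: csubst_def)
  have "fn P0 = fn P" using alpha_fn p a by auto
  hence "dom \<sigma> \<inter> names P0 = {}" using names_sub[of P0] a p by blast
  thus ?thesis using nsubst_ident p by simp
qed

subsection \<open>Structural congruence basics\<close>

lemma scong_wf_fn: "scong P Q \<Longrightarrow> (wf_proc P \<longleftrightarrow> wf_proc Q) \<and> (wf_proc P \<longrightarrow> fn P = fn Q)"
proof (induct rule: scong.induct)
  case (s_alpha P Q) thus ?case using alpha_wf alpha_fn by blast
next
  case (s_extr n P Q) thus ?case by auto
qed auto

lemma scong_wf: "scong P Q \<Longrightarrow> wf_proc P \<Longrightarrow> wf_proc Q" using scong_wf_fn by blast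
lemma scong_fn: "scong P Q \<Longrightarrow> wf_proc P \<Longrightarrow> fn P = fn Q" using scong_wf_fn by blast

lemma scong_mapP: "scong P Q \<Longrightarrow> inj f \<Longrightarrow> scong (mapP f P) (mapP f Q)"
proof (induct rule: scong.induct)
  case (s_alpha P Q) thus ?case using alpha_mapP scong.s_alpha by blast
next
  case (s_extr n P Q)
  have "f n \<notin> fn (mapP f P)" using s_extr by (auto simp: inj_eq)
  thus ?case by (simp add: scong.s_extr)
qed (auto intro: scong.intros)

lemma scong_alphaI: "alpha P Q \<Longrightarrow> scong P Q" by (rule scong.s_alpha)


definition CSrel :: "subst \<Rightarrow> proc \<Rightarrow> proc \<Rightarrow> bool" where
  "CSrel \<sigma> X R \<longleftrightarrow> (\<exists>Z Z'. csubst \<sigma> X Z \<and> csubst \<sigma> R Z' \<and> scong Z Z')"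

lemma csubst_zero: "csubst \<sigma> PZero PZero"
  using csubst_intro[of PZero PZero \<sigma>] by (simp add: alpha.a_refl)

lemma csubst_par: "csubst \<sigma> A Z1 \<Longrightarrow> csubst \<sigma> B Z2 \<Longrightarrow> csubst \<sigma> (PPar A B) (PPar Z1 Z2)"
proof -
  assume "csubst \<sigma> A Z1" "csubst \<sigma> B Z2"
  then obtain A0 B0 where "alpha A A0" "bnames A0 \<inter> SS \<sigma> = {}" "Z1 = nsubst \<sigma> A0"
    "alpha B B0" "bnames B0 \<inter> SS \<sigma> = {}" "Z2 = nsubst \<sigma> B0" by (auto simp: csubst_def)
  thus ?thesis using csubst_intro[of "PPar A B" "PPar A0 B0" \<sigma>] by (auto intro: alpha.a_par)
qed

lemma csubst_rep: "csubst \<sigma> A Z1 \<Longrightarrow> csubst \<sigma> (PRep A) (PRep Z1)"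
proof -
  assume "csubst \<sigma> A Z1"
  then obtain A0 where "alpha A A0" "bnames A0 \<inter> SS \<sigma> = {}" "Z1 = nsubst \<sigma> A0"
    by (auto simp: csubst_def)
  thus ?thesis using csubst_intro[of "PRep A" "PRep A0" \<sigma>] by (auto intro: alpha.a_rep)
qed

lemma csubst_new: "c \<notin> SS \<sigma> \<Longrightarrow> c \<notin> fn (PNew y A) \<Longrightarrow> csubst \<sigma> (swap y c A) Z \<Longrightarrow>
  csubst \<sigma> (PNew y A) (PNew c Z)"
proof -
  assume a: "c \<notin> SS \<sigma>" "c \<notin> fn (PNew y A)" "csubst \<sigma> (swap y c A) Z"
  then obtain B0 where b: "alpha (swap y c A) B0" "bnames B0 \<inter> SS \<sigma> = {}" "Z = nsubst \<sigma> B0"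
    by (auto simp: csubst_def)
  have "alpha (PNew y A) (PNew c (swap y c A))" by (rule alpha.a_new_ren[OF a(2)])
  hence "alpha (PNew y A) (PNew c B0)" using b by (meson alpha.a_new alpha.a_trans)
  thus ?thesis using csubst_intro[of "PNew y A" "PNew c B0" \<sigma>] a b by auto
qed

lemma csubst_case: "alpha (PCase q A) (PCase q' A1) \<Longrightarrow> bn q' \<inter> SS \<sigma> = {} \<Longrightarrow> csubst \<sigma> A1 Z \<Longrightarrow>
  csubst \<sigma> (PCase q A) (PCase (psubst \<sigma> q') Z)"
proof -
  assume a: "alpha (PCase q A) (PCase q' A1)" "bn q' \<inter> SS \<sigma> = {}" "csubst \<sigma> A1 Z"
  then obtain B0 where b: "alpha A1 B0" "bnames B0 \<inter> SS \<sigma> = {}" "Z = nsubst \<sigma> B0"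
    by (auto simp: csubst_def)
  have "alpha (PCase q A) (PCase q' B0)" using a b by (meson alpha.a_case alpha.a_trans)
  thus ?thesis using csubst_intro[of "PCase q A" "PCase q' B0" \<sigma>] a b by auto
qed

lemma CSrel_sym: "CSrel \<sigma> X R \<Longrightarrow> CSrel \<sigma> R X"
  by (auto simp: CSrel_def intro: scong.s_sym)

lemma CS_main: "scong X R \<Longrightarrow> is_subst \<sigma> \<Longrightarrow> \<forall>f. bij f \<longrightarrow> wf_proc X \<longrightarrow> CSrel \<sigma> (mapP f X) (mapP f R)"
proof (induct rule: scong.induct)
  case (s_alpha P Q)
  show ?case
  proof (intro allI impI)
    fix f :: "name \<Rightarrow> name" assume f: "bij f" "wf_proc P"
    have "alpha (mapP f P) (mapP f Q)" using alpha_mapP s_alpha f bij_is_inj by blast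
    moreover obtain Z where "csubst \<sigma> (mapP f Q) Z"
      using csubst_exists s_alpha f alpha_wf bij_is_inj by (metis wf_mapP)
    ultimately show "CSrel \<sigma> (mapP f P) (mapP f Q)"
      unfolding CSrel_def using csubst_alpha scong.s_refl by blast
  qed
next
  case (s_refl P)
  show ?case
  proof (intro allI impI)
    fix f :: "name \<Rightarrow> name" assume f: "bij f" "wf_proc P"
    obtain Z where "csubst \<sigma> (mapP f P) Z" using csubst_exists s_refl f bij_is_inj by (metis wf_mapP)
    thus "CSrel \<sigma> (mapP f P) (mapP f P)" unfolding CSrel_def using scong.s_refl by blast
  qed
next
  case (s_sym P Q)
  thus ?case using scong_wf_fn CSrel_sym by blast
next
  case (s_trans P Q R)
  show ?case
  proof (intro allI impI)
    fix f :: "name \<Rightarrow> name" assume f: "bij f" "wf_proc P"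
    have wq: "wf_proc Q" using s_trans f scong_wf by blast
    obtain Z1 Z1' where 1: "csubst \<sigma> (mapP f P) Z1" "csubst \<sigma> (mapP f Q) Z1'" "scong Z1 Z1'"
      using s_trans f by (auto simp: CSrel_def)
    obtain Z2 Z2' where 2: "csubst \<sigma> (mapP f Q) Z2" "csubst \<sigma> (mapP f R) Z2'" "scong Z2 Z2'"
      using s_trans f wq by (auto simp: CSrel_def)
    have "alpha Z1' Z2" using csubst_unique 1 2 wq f s_trans bij_is_inj by (metis wf_mapP)
    hence "scong Z1 Z2'" using 1 2 by (meson scong.s_alpha scong.s_trans)
    thus "CSrel \<sigma> (mapP f P) (mapP f R)" using 1 2 by (auto simp: CSrel_def)
  qed
next
  case (s_par P P' Q Q')
  show ?case
  proof (intro allI impI)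
    fix f :: "name \<Rightarrow> name" assume f: "bij f" "wf_proc (PPar P Q)"
    obtain Z1 Z1' where 1: "csubst \<sigma> (mapP f P) Z1" "csubst \<sigma> (mapP f P') Z1'" "scong Z1 Z1'"
      using s_par f by (auto simp: CSrel_def)
    obtain Z2 Z2' where 2: "csubst \<sigma> (mapP f Q) Z2" "csubst \<sigma> (mapP f Q') Z2'" "scong Z2 Z2'"
      using s_par f by (auto simp: CSrel_def)
    have "csubst \<sigma> (PPar (mapP f P) (mapP f Q)) (PPar Z1 Z2)" by (rule csubst_par[OF 1(1) 2(1)])
    moreover have "csubst \<sigma> (PPar (mapP f P') (mapP f Q')) (PPar Z1' Z2')" by (rule csubst_par[OF 1(2) 2(2)])
    moreover have "scong (PPar Z1 Z2) (PPar Z1' Z2')" using 1 2 by (simp add: scong.s_par)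
    ultimately show "CSrel \<sigma> (mapP f (PPar P Q)) (mapP f (PPar P' Q'))"
      unfolding CSrel_def mapP.simps by blast
  qed
next
  case (s_rep P P')
  show ?case
  proof (intro allI impI)
    fix f :: "name \<Rightarrow> name" assume f: "bij f" "wf_proc (PRep P)"
    obtain Z1 Z1' where 1: "csubst \<sigma> (mapP f P) Z1" "csubst \<sigma> (mapP f P') Z1'" "scong Z1 Z1'"
      using s_rep f by (auto simp: CSrel_def)
    have "csubst \<sigma> (PRep (mapP f P)) (PRep Z1)" by (rule csubst_rep[OF 1(1)])
    moreover have "csubst \<sigma> (PRep (mapP f P')) (PRep Z1')" by (rule csubst_rep[OF 1(2)])
    moreover have "scong (PRep Z1) (PRep Z1')" using 1 by (simp add: scong.s_rep)
    ultimately show "CSrel \<sigma> (mapP f (PRep P)) (mapP f (PRep P'))"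
      unfolding CSrel_def mapP.simps by blast
  qed
next
  case (s_new P P' x)
  show ?case
  proof (intro allI impI)
    fix f :: "name \<Rightarrow> name" assume f: "bij f" "wf_proc (PNew x P)"
    define y where "y = f x"
    define A where "A = mapP f P"
    define A' where "A' = mapP f P'"
    have fS: "finite (SS \<sigma>)" using finite_SS s_new by blast
    obtain c where c: "c \<notin> SS \<sigma> \<union> names A \<union> names A' \<union> {y}"
      using fresh_name[of "SS \<sigma> \<union> names A \<union> names A' \<union> {y}"] fS by auto
    define f' where "f' = swapn y c \<circ> f"
    have bf': "bij f'" using f by (simp add: f'_def bij_comp)
    obtain Z0 Z0' where z: "csubst \<sigma> (mapP f' P) Z0" "csubst \<sigma> (mapP f' P') Z0'" "scong Z0 Z0'"
      using s_new bf' f by (auto simp: CSrel_def)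
    have e1: "mapP f' P = swap y c A" by (simp add: f'_def A_def swap_mapP)
    have e2: "mapP f' P' = swap y c A'" by (simp add: f'_def A'_def swap_mapP)
    have "csubst \<sigma> (PNew y A) (PNew c Z0)"
      using csubst_new[of c \<sigma> y A Z0] c z e1 fn_sub_names by auto
    moreover have "csubst \<sigma> (PNew y A') (PNew c Z0')"
      using csubst_new[of c \<sigma> y A' Z0'] c z e2 fn_sub_names by auto
    ultimately show "CSrel \<sigma> (mapP f (PNew x P)) (mapP f (PNew x P'))"
      using z unfolding CSrel_def by (auto simp: A_def A'_def y_def intro: scong.s_new)
  qed
next
  case (s_case P P' p)
  show ?case
  proof (intro allI impI)
    fix f :: "name \<Rightarrow> name" assume f: "bij f" "wf_proc (PCase p P)"
    have injf: "inj f" using f bij_is_inj by auto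
    define q where "q = mapp f p"
    define A where "A = mapP f P"
    define A' where "A' = mapP f P'"
    have fS: "finite (SS \<sigma>)" using finite_SS s_case by blast
    obtain cs where cs: "length cs = length (bn_list q)" "distinct cs"
      "set cs \<inter> (SS \<sigma> \<union> names (PCase q A) \<union> names (PCase q A')) = {}"
      using fresh_list[of "SS \<sigma> \<union> names (PCase q A) \<union> names (PCase q A')" "length (bn_list q)"] fS
      by auto
    define t where "t = swaps (zip (bn_list q) cs)"
    have wfA: "wf_proc (PCase q A)" using f injf by (simp add: q_def A_def)
    have wfP': "wf_proc P'" using s_case f scong_wf by auto
    have wfA': "wf_proc (PCase q A')" using f injf wfP' by (simp add: q_def A'_def)
    have cs1: "set cs \<inter> (names (PCase q A) \<union> id ` names (PCase q A)) = {}" using cs by auto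
    have cs2: "set cs \<inter> (names (PCase q A') \<union> id ` names (PCase q A')) = {}" using cs by auto
    note r1 = case_rename[OF inj_on_id wfA _ cs(1,2) cs1]
    note r2 = case_rename[OF inj_on_id wfA' _ cs(1,2) cs2]
    have a1: "alpha (PCase q A) (PCase (mapp t q) (mapP t A))" using r1(3) by (simp add: t_def)
    have a2: "alpha (PCase q A') (PCase (mapp t q) (mapP t A'))" using r2(3) by (simp add: t_def)
    have bt: "bn (mapp t q) \<inter> SS \<sigma> = {}" using r1(8) cs by (simp add: t_def) blast
    define f' where "f' = t \<circ> f"
    have bf': "bij f'" using f by (simp add: f'_def bij_comp t_def)
    obtain Z0 Z0' where z: "csubst \<sigma> (mapP f' P) Z0" "csubst \<sigma> (mapP f' P') Z0'" "scong Z0 Z0'"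
      using s_case bf' f by (auto simp: CSrel_def)
    have "csubst \<sigma> (PCase q A) (PCase (psubst \<sigma> (mapp t q)) Z0)"
      using csubst_case[OF a1 bt] z by (simp add: f'_def A_def)
    moreover have "csubst \<sigma> (PCase q A') (PCase (psubst \<sigma> (mapp t q)) Z0')"
      using csubst_case[OF a2 bt] z by (simp add: f'_def A'_def)
    ultimately show "CSrel \<sigma> (mapP f (PCase p P)) (mapP f (PCase p P'))"
      using z unfolding CSrel_def by (auto simp: A_def A'_def q_def intro: scong.s_case)
  qed
next
  case (s_par_zero P)
  show ?case
  proof (intro allI impI)
    fix f :: "name \<Rightarrow> name" assume f: "bij f" "wf_proc (PPar P PZero)"
    obtain Z where z: "csubst \<sigma> (mapP f P) Z" using csubst_exists s_par_zero f bij_is_inj by (metis wf_mapP wf_proc.simps(2))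
    have "scong (PPar Z PZero) Z" by (rule scong.s_par_zero)
    thus "CSrel \<sigma> (mapP f (PPar P PZero)) (mapP f P)"
      unfolding CSrel_def mapP.simps using z csubst_par[OF z csubst_zero] by blast
  qed
next
  case (s_par_comm P Q)
  show ?case
  proof (intro allI impI)
    fix f :: "name \<Rightarrow> name" assume f: "bij f" "wf_proc (PPar P Q)"
    obtain Z1 where z1: "csubst \<sigma> (mapP f P) Z1" using csubst_exists s_par_comm f bij_is_inj by (metis wf_mapP wf_proc.simps(2))
    obtain Z2 where z2: "csubst \<sigma> (mapP f Q) Z2" using csubst_exists s_par_comm f bij_is_inj by (metis wf_mapP wf_proc.simps(2))
    have "scong (PPar Z1 Z2) (PPar Z2 Z1)" by (rule scong.s_par_comm)
    thus "CSrel \<sigma> (mapP f (PPar P Q)) (mapP f (PPar Q P))"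
      unfolding CSrel_def mapP.simps using csubst_par[OF z1 z2] csubst_par[OF z2 z1] by blast
  qed
next
  case (s_par_assoc P Q R)
  show ?case
  proof (intro allI impI)
    fix f :: "name \<Rightarrow> name" assume f: "bij f" "wf_proc (PPar P (PPar Q R))"
    obtain Z1 where z1: "csubst \<sigma> (mapP f P) Z1" using csubst_exists s_par_assoc f bij_is_inj by (metis wf_mapP wf_proc.simps(2))
    obtain Z2 where z2: "csubst \<sigma> (mapP f Q) Z2" using csubst_exists s_par_assoc f bij_is_inj by (metis wf_mapP wf_proc.simps(2))
    obtain Z3 where z3: "csubst \<sigma> (mapP f R) Z3" using csubst_exists s_par_assoc f bij_is_inj by (metis wf_mapP wf_proc.simps(2))
    have "scong (PPar Z1 (PPar Z2 Z3)) (PPar (PPar Z1 Z2) Z3)" by (rule scong.s_par_assoc)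
    thus "CSrel \<sigma> (mapP f (PPar P (PPar Q R))) (mapP f (PPar (PPar P Q) R))"
      unfolding CSrel_def mapP.simps using csubst_par[OF z1 csubst_par[OF z2 z3]] csubst_par[OF csubst_par[OF z1 z2] z3]
        by blast
  qed
next
  case (s_new_zero n)
  show ?case
  proof (intro allI impI)
    fix f :: "name \<Rightarrow> name" assume f: "bij f" "wf_proc (PNew n PZero)"
    have fS: "finite (SS \<sigma>)" using finite_SS s_new_zero by blast
    obtain c where c: "c \<notin> SS \<sigma>" using fresh_name[OF fS] by auto
    have "csubst \<sigma> (PNew (f n) PZero) (PNew c PZero)"
      using csubst_new[of c \<sigma> "f n" PZero PZero] c csubst_zero by (simp add: swap_mapP)
    moreover have "scong (PNew c PZero) PZero" by (rule scong.s_new_zero)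
    ultimately show "CSrel \<sigma> (mapP f (PNew n PZero)) (mapP f PZero)"
      unfolding CSrel_def mapP.simps using csubst_zero by blast
  qed
next
  case (s_new_comm n m P)
  show ?case
  proof (intro allI impI)
    fix f :: "name \<Rightarrow> name" assume f: "bij f" "wf_proc (PNew n (PNew m P))"
    define a where "a = f n"
    define b where "b = f m"
    define Q where "Q = mapP f P"
    have wQ: "wf_proc Q" using f bij_is_inj[OF f(1)] by (simp add: Q_def)
    have fS: "finite (SS \<sigma>)" using finite_SS s_new_comm by blast
    show "CSrel \<sigma> (mapP f (PNew n (PNew m P))) (mapP f (PNew m (PNew n P)))"
    proof (cases "a = b")
      case True
      obtain Z where "csubst \<sigma> (PNew a (PNew b Q)) Z" using csubst_exists s_new_comm wQ by fastforce
      thus ?thesis unfolding CSrel_def using True scong.s_refl by (auto simp: a_def b_def Q_def)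
    next
      case False
      obtain c where c: "c \<notin> SS \<sigma> \<union> names Q \<union> {a, b}"
        using fresh_name[of "SS \<sigma> \<union> names Q \<union> {a, b}"] fS by auto
      obtain d where d: "d \<notin> SS \<sigma> \<union> names Q \<union> {a, b, c}"
        using fresh_name[of "SS \<sigma> \<union> names Q \<union> {a, b, c}"] fS by auto
      define T where "T = swap b d (swap a c Q)"
      have T2: "swap a c (swap b d Q) = T"
      proof -
        have "swapn a c \<circ> swapn b d = swapn b d \<circ> swapn a c"
          using False c d by (auto simp: fun_eq_iff swapn_def)
        thus ?thesis by (simp add: T_def swap_mapP)
      qed
      have wT: "wf_proc T" using wQ by (simp add: T_def swap_mapP inj_compose)
      obtain Z where z: "csubst \<sigma> T Z" using csubst_exists s_new_comm wT by blast
      have fnQ: "fn Q \<subseteq> names Q" by (rule fn_sub_names)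
      have sw1: "swap a c (PNew b Q) = PNew b (swap a c Q)" using False c by (simp add: swap_mapP)
      have sw2: "swap b d (PNew a Q) = PNew a (swap b d Q)" using False d by (simp add: swap_mapP)
      have "csubst \<sigma> (PNew b (swap a c Q)) (PNew d Z)"
        by (rule csubst_new) (use d z fnQ in \<open>auto simp: T_def swap_mapP swapn_def\<close>)
      hence L: "csubst \<sigma> (PNew a (PNew b Q)) (PNew c (PNew d Z))"
        by (intro csubst_new) (use c fnQ sw1 in auto)
      have "csubst \<sigma> (PNew a (swap b d Q)) (PNew c Z)"
        by (rule csubst_new) (use c d z fnQ T2 in \<open>auto simp: swap_mapP swapn_def\<close>)
      hence R: "csubst \<sigma> (PNew b (PNew a Q)) (PNew d (PNew c Z))"
        by (intro csubst_new) (use d fnQ sw2 in auto)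
      have "scong (PNew c (PNew d Z)) (PNew d (PNew c Z))" by (rule scong.s_new_comm)
      thus ?thesis unfolding CSrel_def using L R
        by (simp add: a_def b_def Q_def) blast
    qed
  qed
next
  case (s_rep_unf P)
  show ?case
  proof (intro allI impI)
    fix f :: "name \<Rightarrow> name" assume f: "bij f" "wf_proc (PRep P)"
    obtain Z where z: "csubst \<sigma> (mapP f P) Z" using csubst_exists s_rep_unf f bij_is_inj by (metis wf_mapP wf_proc.simps(3))
    have "scong (PRep Z) (PPar Z (PRep Z))" by (rule scong.s_rep_unf)
    thus "CSrel \<sigma> (mapP f (PRep P)) (mapP f (PPar P (PRep P)))"
      unfolding CSrel_def mapP.simps using csubst_rep[OF z] csubst_par[OF z csubst_rep[OF z]] by blast
  qed
next
  case (s_extr n P Q)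
  show ?case
  proof (intro allI impI)
    fix f :: "name \<Rightarrow> name" assume f: "bij f" "wf_proc (PPar P (PNew n Q))"
    have injf: "inj f" using f bij_is_inj by auto
    define y where "y = f n"
    define A where "A = mapP f P"
    define B where "B = mapP f Q"
    have wA: "wf_proc A" "wf_proc B" using f injf by (auto simp: A_def B_def)
    have yA: "y \<notin> fn A" using s_extr injf by (auto simp: A_def y_def inj_eq)
    have fS: "finite (SS \<sigma>)" using finite_SS s_extr by blast
    obtain c where c: "c \<notin> SS \<sigma> \<union> names A \<union> names B \<union> {y}"
      using fresh_name[of "SS \<sigma> \<union> names A \<union> names B \<union> {y}"] fS by auto
    have cA: "c \<notin> fn A" using c fn_sub_names by auto
    obtain ZA where za: "csubst \<sigma> A ZA" using csubst_exists s_extr wA by blast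
    obtain ZB where zb: "csubst \<sigma> (swap y c B) ZB" using csubst_exists s_extr wA
      by (metis swap_mapP wf_mapP inj_swapn)
    have "alpha (swap y c A) A"
    proof -
      have "\<forall>z\<in>fn A. swapn y c z = z" using yA cA by (auto simp: swapn_def)
      hence "alpha A (mapP (swapn y c) A)" using GL[OF inj_swapn[of y c] wA(1)] by blast
      thus ?thesis by (simp add: swap_mapP alpha.a_sym)
    qed
    hence za': "csubst \<sigma> (swap y c A) ZA" using za csubst_alpha by blast
    have "csubst \<sigma> (PNew y B) (PNew c ZB)"
      by (rule csubst_new) (use c zb fn_sub_names in auto)
    hence L: "csubst \<sigma> (PPar A (PNew y B)) (PPar ZA (PNew c ZB))" using za csubst_par by blast
    have "csubst \<sigma> (swap y c (PPar A B)) (PPar ZA ZB)" using csubst_par[OF za' zb] by (simp add: swap_mapP)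
    hence R: "csubst \<sigma> (PNew y (PPar A B)) (PNew c (PPar ZA ZB))"
      by (intro csubst_new) (use c fn_sub_names in auto)
    have "c \<notin> fn ZA" using csubst_fn[OF za wA(1) is_subst_comr[OF s_extr(2)]] cA c by auto
    hence "scong (PPar ZA (PNew c ZB)) (PNew c (PPar ZA ZB))" by (rule scong.s_extr)
    thus "CSrel \<sigma> (mapP f (PPar P (PNew n Q))) (mapP f (PNew n (PPar P Q)))"
      unfolding CSrel_def using L R by (auto simp: A_def B_def y_def)
  qed
qed

lemma CS: "scong X R \<Longrightarrow> wf_proc X \<Longrightarrow> is_subst \<sigma> \<Longrightarrow> csubst \<sigma> X Z \<Longrightarrow>
  \<exists>Z'. csubst \<sigma> R Z' \<and> scong Z Z'"
proof -
  assume a: "scong X R" "wf_proc X" "is_subst \<sigma>" "csubst \<sigma> X Z"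
  have "CSrel \<sigma> (mapP id X) (mapP id R)" using CS_main[OF a(1) a(3)] a(2) by blast
  then obtain Z0 Z0' where z: "csubst \<sigma> X Z0" "csubst \<sigma> R Z0'" "scong Z0 Z0'"
    by (auto simp: CSrel_def)
  have "alpha Z Z0" using csubst_unique a z by blast
  thus ?thesis using z by (meson scong.s_alpha scong.s_trans)
qed


subsection \<open>Unification\<close>

lemma munion_Some: "munion s1 s2 = Some s \<Longrightarrow> s = s1 ++ s2"
  by (auto simp: munion_def split: if_splits)

definition unif_ok :: "subst \<Rightarrow> pat \<Rightarrow> pat \<Rightarrow> bool" where
  "unif_ok \<sigma> p q \<longleftrightarrow> dom \<sigma> = bn p \<and> (\<forall>x r. \<sigma> x = Some r \<longrightarrow> communicable r \<and> psz r \<le> psz q \<and> pnames r \<subseteq> fnp q)"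

lemma unify_ok: "unify p q = Some (\<sigma>, \<rho>) \<Longrightarrow> unif_ok \<sigma> p q \<and> unif_ok \<rho> q p"
proof (induct p q arbitrary: \<sigma> \<rho> rule: unify.induct)
  case (7 p1 p2 q1 q2)
  obtain s1 r1 s2 r2 where u: "unify p1 q1 = Some (s1, r1)" "unify p2 q2 = Some (s2, r2)"
    "munion s1 s2 = Some \<sigma>" "munion r1 r2 = Some \<rho>"
    using 7(3) by (auto split: option.splits prod.splits)
  have i1: "unif_ok s1 p1 q1 \<and> unif_ok r1 q1 p1" using 7(1) u by blast
  have i2: "unif_ok s2 p2 q2 \<and> unif_ok r2 q2 p2" using 7(2) u by blast
  have e: "\<sigma> = s1 ++ s2" "\<rho> = r1 ++ r2" using u munion_Some by auto
  show ?case using i1 i2 unfolding e unif_ok_def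
    by (auto simp: map_add_Some_iff dom_map_add) force+
qed (auto simp: unif_ok_def comm_bn comm_pnames split: if_splits)

lemma unif_ok_is_subst: "unif_ok \<sigma> p q \<Longrightarrow> is_subst \<sigma>"
  by (auto simp: unif_ok_def is_subst_def ran_def)

lemma unif_ok_ran_names: "unif_ok \<sigma> p q \<Longrightarrow> ran_names \<sigma> \<subseteq> fnp q"
proof
  fix z assume u: "unif_ok \<sigma> p q" and z: "z \<in> ran_names \<sigma>"
  then obtain r where r: "r \<in> ran \<sigma>" "z \<in> fnp r \<union> bn r" by (auto simp: ran_names_def)
  then obtain x where "\<sigma> x = Some r" by (auto simp: ran_def)
  hence "pnames r \<subseteq> fnp q" using u by (auto simp: unif_ok_def)
  thus "z \<in> fnp q" using r by (auto simp: pnames_eq)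
qed

lemma unif_ok_psz: "unif_ok \<sigma> p q \<Longrightarrow> \<forall>r\<in>ran \<sigma>. psz r \<le> psz q"
  by (auto simp: unif_ok_def ran_def)

lemma finite_vn[simp]: "finite (vn p)" by (induct p) auto

lemma card_vn_le: "card (vn p) \<le> psz p"
proof (induct p)
  case (PComp p q)
  have "card (vn (PComp p q)) \<le> card (vn p) + card (vn q)" by (simp add: card_Un_le)
  thus ?case using PComp by simp
qed (auto simp: card_insert_if)



definition labok :: "proc \<Rightarrow> name list \<Rightarrow> pat \<Rightarrow> bool" where
  "labok Y ns p \<longleftrightarrow> distinct ns \<and> set ns \<subseteq> vn p \<and> fnp p \<subseteq> fn Y \<union> set ns \<and> psz p \<le> maxpat Y \<and> wf_pat p"

lemma labok_len: "labok Y ns p \<Longrightarrow> length ns \<le> maxpat Y"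
proof -
  assume "labok Y ns p"
  hence "length ns = card (set ns)" "set ns \<subseteq> vn p" "psz p \<le> maxpat Y" by (auto simp: labok_def distinct_card)
  moreover have "card (set ns) \<le> card (vn p)" using calculation by (intro card_mono) auto
  ultimately show ?thesis using card_vn_le[of p] by linarith
qed

lemma ltr_wf_lab: "ltr Y \<mu> X \<Longrightarrow> wf_proc Y \<Longrightarrow> wf_proc X \<and> (\<forall>ns p. \<mu> = Lab ns p \<longrightarrow> labok Y ns p)"
proof (induct rule: ltr.induct)
  case (t_case p P) thus ?case by (auto simp: labok_def fnp_def)
next
  case (t_resnon P \<mu> P' n) thus ?case by (auto simp: labok_def)
next
  case (t_open P ns p P' m) thus ?case by (auto simp: labok_def)
next
  case (t_unify P ms p P' Q ns q Q' \<sigma> \<rho> P'' Q'')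
  have u: "unif_ok \<sigma> p q" "unif_ok \<rho> q p" using unify_ok t_unify by auto
  have "wf_proc P''" using csubst_wf t_unify unif_ok_is_subst[OF u(1)] is_subst_comr by auto
  moreover have "wf_proc Q''" using csubst_wf t_unify unif_ok_is_subst[OF u(2)] is_subst_comr by auto
  moreover have "\<And>L X. wf_proc (News L X) = wf_proc X" by (induct_tac L) auto
  ultimately show ?case by simp
next
  case (t_rep P \<mu> P') thus ?case by (auto simp: labok_def)
next
  case (t_alpha P Q \<mu> Q' P')
  have "wf_proc Q" using t_alpha alpha_wf by blast
  moreover have "fn P = fn Q" "maxpat P = maxpat Q" using t_alpha alpha_fn alpha_sz by auto
  ultimately show ?case using t_alpha alpha_wf by (auto simp: labok_def)
qed (auto simp: labok_def)

lemma ltr_wf: "ltr Y \<mu> X \<Longrightarrow> wf_proc Y \<Longrightarrow> wf_proc X" using ltr_wf_lab by blast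
lemma ltr_lab: "ltr Y (Lab ns p) X \<Longrightarrow> wf_proc Y \<Longrightarrow> labok Y ns p" using ltr_wf_lab by blast

lemmas scong_trans[trans] = scong.s_trans

lemma fn_News[simp]: "fn (News L X) = fn X - set L" by (induct L) auto
lemma sz_News[simp]: "sz (News L X) = length L + sz X" by (induct L) auto
lemma wf_News[simp]: "wf_proc (News L X) = wf_proc X" by (induct L) auto
lemma scong_News: "scong X Y \<Longrightarrow> scong (News L X) (News L Y)"
  by (induct L) (auto intro: scong.s_new)

lemma scong_News_extr: "set L \<inter> fn B = {} \<Longrightarrow> scong (News L (PPar X B)) (PPar (News L X) B)"
proof (induct L)
  case Nil thus ?case by (simp add: scong.s_refl)
next
  case (Cons n L)
  have "scong (News (n # L) (PPar X B)) (PNew n (PPar (News L X) B))"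
    using Cons by (auto intro: scong.s_new)
  also have "scong (PNew n (PPar (News L X) B)) (PNew n (PPar B (News L X)))"
    by (rule scong.s_new[OF scong.s_par_comm])
  also have "scong (PNew n (PPar B (News L X))) (PPar B (PNew n (News L X)))"
    using Cons by (auto intro!: scong.s_sym[OF scong.s_extr])
  also have "scong (PPar B (PNew n (News L X))) (PPar (News (n # L) X) B)"
    by (simp add: scong.s_par_comm)
  finally show ?case .
qed


subsection \<open>Arithmetic\<close>

lemma add_le_mult2: "(x::nat) \<ge> 2 \<Longrightarrow> y \<ge> 2 \<Longrightarrow> x + y \<le> x * y"
proof (cases "x \<ge> y")
  case True
  assume "x \<ge> 2" "y \<ge> 2"
  hence "x * 2 \<le> x * y" by (intro mult_le_mono2)
  thus ?thesis using True by linarith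
next
  case False
  assume "x \<ge> 2" "y \<ge> 2"
  hence "2 * y \<le> x * y" by (intro mult_le_mono1)
  thus ?thesis using False by linarith
qed

lemma pow_ge_base: "(A::nat) \<ge> 1 \<Longrightarrow> a \<ge> 1 \<Longrightarrow> A \<le> A^a"
  using power_increasing[of 1 a A] by simp

lemma pow_add_ge: "(A::nat) \<ge> 2 \<Longrightarrow> a \<ge> 1 \<Longrightarrow> b \<ge> 1 \<Longrightarrow> A^a + A^b \<le> A^(a+b)"
proof -
  assume h: "A \<ge> 2" "a \<ge> 1" "b \<ge> 1"
  have "A^a \<ge> 2" using pow_ge_base[of A a] h by linarith
  moreover have "A^b \<ge> 2" using pow_ge_base[of A b] h by linarith
  ultimately have "A^a + A^b \<le> A^a * A^b" by (rule add_le_mult2)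
  thus ?thesis by (simp add: power_add)
qed

lemma n_le_pow: "(A::nat) \<ge> 2 \<Longrightarrow> n \<le> A^n"
proof -
  assume "A \<ge> 2"
  have "n < 2^n" by (rule less_exp)
  also have "2^n \<le> A^n" using \<open>A \<ge> 2\<close> by (rule power_mono) simp
  finally show ?thesis by simp
qed

lemma pow_mono2: "(A::nat) \<ge> 1 \<Longrightarrow> n \<le> m \<Longrightarrow> A^n \<le> A^m" by (rule power_increasing)
lemma pow_mono1: "(A::nat) \<le> B \<Longrightarrow> A^n \<le> B^n" by (rule power_mono) simp_all

lemma ar_new: "(A::nat) \<ge> 2 \<Longrightarrow> x \<le> A^a \<Longrightarrow> x + 1 \<le> A^(a+1)"
proof -
  assume h: "A \<ge> 2" "x \<le> A^a"
  have "A^a \<ge> 1" using h by simp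
  hence "A^a + 1 \<le> A^a * 2" by simp
  also have "\<dots> \<le> A^a * A" using h by (intro mult_le_mono2) simp
  finally show ?thesis using h by (simp add: power_add mult.commute)
qed

lemma ar_par: "(A::nat) \<ge> 2 \<Longrightarrow> a \<ge> 1 \<Longrightarrow> x \<le> A^a \<Longrightarrow> s \<le> b \<Longrightarrow> x + s + 1 \<le> A^(a+b+1)"
proof -
  assume h: "A \<ge> 2" "a \<ge> 1" "x \<le> A^a" "s \<le> b"
  have "A^a + A^(b+1) \<le> A^(a+(b+1))" using h by (intro pow_add_ge) auto
  moreover have "b + 1 \<le> A^(b+1)" using h n_le_pow by blast
  ultimately show ?thesis using h by (simp add: add.assoc)
qed

lemma ar_par': "(A::nat) \<ge> 2 \<Longrightarrow> b \<ge> 1 \<Longrightarrow> x \<le> A^b \<Longrightarrow> s \<le> a \<Longrightarrow> s + x + 1 \<le> A^(a+b+1)"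
  using ar_par[of A b x s a] by (simp add: add.commute add.left_commute)

lemma ar_rep: "(A::nat) \<ge> 2 \<Longrightarrow> w \<ge> 1 \<Longrightarrow> x \<le> A^(2*w+1) \<Longrightarrow> s \<le> w \<Longrightarrow> x + s + 2 \<le> A^(3*w+3)"
proof -
  assume h: "A \<ge> 2" "w \<ge> 1" "x \<le> A^(2*w+1)" "s \<le> w"
  have "A^(2*w+1) + A^(w+2) \<le> A^((2*w+1)+(w+2))" using h by (intro pow_add_ge) auto
  moreover have "w + 2 \<le> A^(w+2)" using h n_le_pow by blast
  moreover have "(2*w+1)+(w+2) = 3*w+3" by simp
  hence "A^((2*w+1)+(w+2)) = A^(3*w+3)" by (simp only:)
  ultimately show ?thesis using h by linarith
qed

lemma ar_unify: "(K::nat) \<ge> 1 \<Longrightarrow> a \<ge> 1 \<Longrightarrow> b \<ge> 1 \<Longrightarrow> x \<le> (2*K+3)^a \<Longrightarrow> y \<le> (2*K+3)^b \<Longrightarrow>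
  l1 \<le> K \<Longrightarrow> l2 \<le> K \<Longrightarrow> l1 + l2 + (K*x + K*y + 1) \<le> (2*K+3)^(a+b+1)"
proof -
  assume h: "K \<ge> 1" "a \<ge> 1" "b \<ge> 1" "x \<le> (2*K+3)^a" "y \<le> (2*K+3)^b" "l1 \<le> K" "l2 \<le> K"
  define A where "A = 2*K+3"
  have A2: "A \<ge> 2" by (simp add: A_def)
  have s: "A^a + A^b \<le> A^(a+b)" using A2 h by (intro pow_add_ge) auto
  have pa: "A^a \<ge> 1" "A^b \<ge> 1" using A2 by simp_all
  have "K*x + K*y \<le> K*(A^a + A^b)" using h by (simp add: A_def add_mult_distrib2 add_mono)
  moreover have "2*K + 1 \<le> (K+3)*(A^a + A^b)"
  proof -
    have "(K+3)*2 \<le> (K+3)*(A^a + A^b)" using pa by (intro mult_le_mono2) simp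
    thus ?thesis by simp
  qed
  ultimately have "l1 + l2 + (K*x + K*y + 1) \<le> (2*K+3)*(A^a + A^b)" using h
    by (simp add: algebra_simps)
  also have "\<dots> \<le> (2*K+3)*A^(a+b)" using s by (simp add: A_def)
  also have "\<dots> = A^(a+b+1)" by (simp add: A_def)
  finally show ?thesis by (simp add: A_def)
qed


definition AA :: "proc \<Rightarrow> nat" where "AA Y = 2 * maxpat Y + 3"
definition BB :: "proc \<Rightarrow> nat" where "BB Y = AA Y ^ wsz Y"

lemma AA_ge2[simp]: "AA Y \<ge> 2" by (simp add: AA_def)

definition Gen :: "proc \<Rightarrow> lab \<Rightarrow> proc \<Rightarrow> bool" where
  "Gen Y \<mu> X \<longleftrightarrow> (\<exists>R. scong X R \<and> sz R \<le> BB Y \<and> fn R \<subseteq> fn Y \<union> lnames \<mu> \<and> wf_proc R)"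

definition Str :: "proc \<Rightarrow> lab \<Rightarrow> proc \<Rightarrow> bool" where
  "Str T \<mu> X \<longleftrightarrow> (\<exists>D. scong X (PPar D (PRep T)) \<and> wf_proc D \<and> fn D \<subseteq> fn T \<union> lnames \<mu> \<and>
     sz D \<le> (case \<mu> of Tau \<Rightarrow> AA T ^ (2 * wsz T + 1) | Lab ns p \<Rightarrow> AA T ^ wsz T) \<and>
     (case \<mu> of Tau \<Rightarrow> True | Lab ns p \<Rightarrow> (set ns \<union> bn p) \<inter> fn T = {}))"

inductive tw :: "proc \<Rightarrow> proc \<Rightarrow> bool" where
  tw_rep: "alpha T P0 \<Longrightarrow> tw T (PRep P0)"
| tw_par: "tw T W \<Longrightarrow> alpha T Q \<Longrightarrow> tw T (PPar W Q)"

inductive_cases twE: "tw T PZero" "tw T (PNew n P)" "tw T (PCase p P)" "tw T (PRep P)" "tw T (PPar W Q)"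

lemma absorb: "alpha T Q \<Longrightarrow> scong (PPar (PRep T) Q) (PRep T)"
proof -
  assume "alpha T Q"
  hence "scong (PPar (PRep T) Q) (PPar (PRep T) T)"
    by (rule scong.s_par[OF scong.s_refl scong.s_alpha[OF alpha.a_sym]])
  also have "scong (PPar (PRep T) T) (PPar T (PRep T))" by (rule scong.s_par_comm)
  also have "scong (PPar T (PRep T)) (PRep T)" by (rule scong.s_sym[OF scong.s_rep_unf])
  finally show ?thesis .
qed

lemma tw_facts: "tw T Y \<Longrightarrow> wf_proc Y \<Longrightarrow>
  wf_proc T \<and> scong Y (PRep T) \<and> fn Y = fn T \<and> maxpat Y = maxpat T \<and> 3 * wsz T + 3 \<le> wsz Y"
proof (induct rule: tw.induct)
  case (tw_rep T P0)
  have w: "wf_proc T" using tw_rep alpha_wf by auto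
  have "scong (PRep P0) (PRep T)" by (rule scong.s_rep[OF scong.s_alpha[OF alpha.a_sym[OF tw_rep(1)]]])
  moreover have "fn P0 = fn T" using alpha_fn tw_rep w by auto
  moreover have "maxpat P0 = maxpat T" "wsz P0 = wsz T" using alpha_sz tw_rep by auto
  ultimately show ?case using w by simp
next
  case (tw_par T W Q)
  have IH: "wf_proc T" "scong W (PRep T)" "fn W = fn T" "maxpat W = maxpat T" "3 * wsz T + 3 \<le> wsz W"
    using tw_par by auto
  have "fn Q = fn T" using alpha_fn tw_par IH by auto
  moreover have "maxpat Q = maxpat T" using alpha_sz tw_par by auto
  moreover have "scong (PPar W Q) (PRep T)"
  proof -
    have "scong (PPar W Q) (PPar (PRep T) Q)" by (rule scong.s_par[OF IH(2) scong.s_refl])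
    also have "scong (PPar (PRep T) Q) (PRep T)" using tw_par absorb by blast
    finally show ?thesis .
  qed
  ultimately show ?case using IH by auto
qed

lemma tw_alpha: "tw T Y \<Longrightarrow> alpha Y Y' \<Longrightarrow> wf_proc Y \<Longrightarrow> tw T Y'"
proof (induct arbitrary: Y' rule: tw.induct)
  case (tw_rep T P0)
  obtain P1 where "Y' = PRep P1" "alpha P0 P1" using alpha_PRep tw_rep by blast
  thus ?case using tw_rep by (meson alpha.a_trans tw.tw_rep)
next
  case (tw_par T W Q)
  obtain W' Q' where "Y' = PPar W' Q'" "alpha W W'" "alpha Q Q'" using alpha_PPar tw_par by blast
  thus ?case using tw_par by (meson alpha.a_trans tw.tw_par wf_proc.simps(2))
qed

lemma BB_Case: "sz P \<le> BB (PCase p P)"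
proof -
  have "sz P \<le> wsz (PCase p P)" using sz_le_wsz[of P] by simp
  also have "\<dots> \<le> BB (PCase p P)" unfolding BB_def by (rule n_le_pow) simp
  finally show ?thesis .
qed

lemma fn_chain: "Z \<subseteq> (R - B) \<union> RN \<Longrightarrow> R \<subseteq> F \<union> (N \<union> FP \<union> B) \<Longrightarrow> FP \<subseteq> F \<union> N \<Longrightarrow> RN \<subseteq> G \<Longrightarrow>
  Z \<subseteq> F \<union> G \<union> N" by blast

lemma main: "ltr Y \<mu> X \<Longrightarrow> wf_proc Y \<Longrightarrow> Gen Y \<mu> X \<and> (\<forall>T. tw T Y \<longrightarrow> Str T \<mu> X)"
proof (induct rule: ltr.induct)
  case (t_case p P)
  have "Gen (PCase p P) (Lab [] p) P"
    unfolding Gen_def using t_case BB_Case by (auto intro!: exI[of _ P] scong.s_refl)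
  thus ?case by (auto elim: twE)
next
  case (t_resnon P \<mu> P' n)
  obtain R where R: "scong P' R" "sz R \<le> BB P" "fn R \<subseteq> fn P \<union> lnames \<mu>" "wf_proc R"
    using t_resnon by (auto simp: Gen_def)
  have "sz (PNew n R) \<le> BB (PNew n P)"
    using R ar_new[of "AA P" "sz R" "wsz P"] by (simp add: BB_def AA_def)
  moreover have "scong (PNew n P') (PNew n R)" by (rule scong.s_new[OF R(1)])
  moreover have "fn (PNew n R) \<subseteq> fn (PNew n P) \<union> lnames \<mu>" using R by auto
  ultimately have "Gen (PNew n P) \<mu> (PNew n P')" using R unfolding Gen_def by (intro exI[of _ "PNew n R"]) auto
  thus ?case by (auto elim: twE)
next
  case (t_open P ns p P' m)
  obtain R where R: "scong P' R" "sz R \<le> BB P" "fn R \<subseteq> fn P \<union> lnames (Lab ns p)" "wf_proc R"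
    using t_open by (auto simp: Gen_def)
  have "BB P \<le> BB (PNew m P)" unfolding BB_def AA_def by (simp add: power_increasing)
  moreover have "fn P \<union> lnames (Lab ns p) \<subseteq> fn (PNew m P) \<union> lnames (Lab (ns @ [m]) p)" by auto
  ultimately have "Gen (PNew m P) (Lab (ns @ [m]) p) P'" using R unfolding Gen_def
    by (intro exI[of _ R]) auto
  thus ?case by (auto elim: twE)
next
  case (t_unify P ms p P' Q ns q Q' \<sigma> \<rho> P'' Q'')
  have wf: "wf_proc P" "wf_proc Q" using t_unify.prems by auto
  have u: "unif_ok \<sigma> p q" "unif_ok \<rho> q p" using unify_ok t_unify(5) by auto
  have iss: "is_subst \<sigma>" "is_subst \<rho>" using u unif_ok_is_subst by auto
  have cm: "comr \<sigma>" "comr \<rho>" using iss is_subst_comr by auto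
  have dom: "dom \<sigma> = bn p" "dom \<rho> = bn q" using u by (auto simp: unif_ok_def)
  have rn: "ran_names \<sigma> \<subseteq> fnp q" "ran_names \<rho> \<subseteq> fnp p" using u unif_ok_ran_names by auto
  have rp: "\<forall>r\<in>ran \<sigma>. psz r \<le> psz q" "\<forall>r\<in>ran \<rho>. psz r \<le> psz p" using u unif_ok_psz by auto
  have l1: "labok P ms p" using ltr_lab t_unify(1) wf by blast
  have l2: "labok Q ns q" using ltr_lab t_unify(3) wf by blast
  have wP': "wf_proc P'" using ltr_wf t_unify(1) wf by blast
  have wQ': "wf_proc Q'" using ltr_wf t_unify(3) wf by blast
  have IH1: "Gen P (Lab ms p) P'" "\<forall>T. tw T P \<longrightarrow> Str T (Lab ms p) P'" using t_unify(2) wf by auto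
  have IH2: "Gen Q (Lab ns q) Q'" using t_unify(4) wf by auto
  obtain R2 where R2: "scong Q' R2" "sz R2 \<le> BB Q" "fn R2 \<subseteq> fn Q \<union> lnames (Lab ns q)" "wf_proc R2"
    using IH2 by (auto simp: Gen_def)
  obtain Z2 where Z2: "csubst \<rho> R2 Z2" "scong Q'' Z2" using CS[OF R2(1) wQ' iss(2) t_unify(10)] by blast
  have fZ2: "fn Z2 \<subseteq> fn Q \<union> fnp p \<union> set ns"
    using fn_chain[OF csubst_fn[OF Z2(1) R2(4) cm(2)], of "fn Q" "set ns" "fnp q" "fnp p"] R2(3) dom rn l2
    unfolding labok_def by simp
  have wZ2: "wf_proc Z2" using csubst_wf[OF Z2(1) R2(4) cm(2)] .
  define L where "L = ms @ ns"
  define K where "K = maxpat (PPar P Q)"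
  have K1: "K \<ge> 1" unfolding K_def by (rule maxpat_pos)
  have Gen_part: "Gen (PPar P Q) Tau (News L (PPar P'' Q''))"
  proof -
    obtain R1 where R1: "scong P' R1" "sz R1 \<le> BB P" "fn R1 \<subseteq> fn P \<union> lnames (Lab ms p)" "wf_proc R1"
      using IH1 by (auto simp: Gen_def)
    obtain Z1 where Z1: "csubst \<sigma> R1 Z1" "scong P'' Z1" using CS[OF R1(1) wP' iss(1) t_unify(9)] by blast
    have fZ1: "fn Z1 \<subseteq> fn P \<union> fnp q \<union> set ms"
      using fn_chain[OF csubst_fn[OF Z1(1) R1(4) cm(1)], of "fn P" "set ms" "fnp p" "fnp q"] R1(3) dom rn l1
      unfolding labok_def by simp
    have wZ1: "wf_proc Z1" using csubst_wf[OF Z1(1) R1(4) cm(1)] .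
    have sc: "scong (News L (PPar P'' Q'')) (News L (PPar Z1 Z2))"
      by (rule scong_News[OF scong.s_par[OF Z1(2) Z2(2)]])
    have pq: "psz q \<le> K" "psz p \<le> K" using l1 l2 by (auto simp: labok_def K_def)
    have sZ1: "sz Z1 \<le> K * sz R1" using csubst_sz[OF Z1(1) cm(1) K1] rp pq by force
    have sZ2: "sz Z2 \<le> K * sz R2" using csubst_sz[OF Z2(1) cm(2) K1] rp pq by force
    have lens: "length ms \<le> K" "length ns \<le> K" using labok_len[OF l1] labok_len[OF l2] by (auto simp: K_def)
    have b1: "sz R1 \<le> (2*K+3) ^ wsz P"
      using R1(2) pow_mono1[of "AA P" "2*K+3" "wsz P"] by (simp add: BB_def AA_def K_def)
    have b2: "sz R2 \<le> (2*K+3) ^ wsz Q"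
      using R2(2) pow_mono1[of "AA Q" "2*K+3" "wsz Q"] by (simp add: BB_def AA_def K_def)
    have "length ms + length ns + (K * sz R1 + K * sz R2 + 1) \<le> (2*K+3) ^ (wsz P + wsz Q + 1)"
      using ar_unify[OF K1 wsz_pos wsz_pos b1 b2 lens] .
    hence "sz (News L (PPar Z1 Z2)) \<le> BB (PPar P Q)"
      using sZ1 sZ2 by (simp add: L_def BB_def AA_def K_def)
    moreover have "fn (News L (PPar Z1 Z2)) \<subseteq> fn (PPar P Q) \<union> lnames Tau"
      using fZ1 fZ2 l1 l2 by (auto simp: L_def labok_def)
    ultimately show ?thesis using sc wZ1 wZ2 unfolding Gen_def
      by (intro exI[of _ "News L (PPar Z1 Z2)"]) auto
  qed
  have "Str T Tau (News L (PPar P'' Q''))" if tw: "tw T (PPar P Q)" for T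
  proof -
    have tP: "tw T P" and aQ: "alpha T Q" using tw by (auto elim: twE)
    note tf = tw_facts[OF tP wf(1)]
    have fQ: "fn Q = fn T" using alpha_fn aQ tf by auto
    have sQ: "maxpat Q = maxpat T" "wsz Q = wsz T" using alpha_sz aQ by auto
    obtain D1 where D1: "scong P' (PPar D1 (PRep T))" "wf_proc D1" "fn D1 \<subseteq> fn T \<union> lnames (Lab ms p)"
        "sz D1 \<le> AA T ^ wsz T" "(set ms \<union> bn p) \<inter> fn T = {}"
      using IH1 tP unfolding Str_def by auto
    obtain Z1 where Z1: "csubst \<sigma> (PPar D1 (PRep T)) Z1" "scong P'' Z1"
      using CS[OF D1(1) wP' iss(1) t_unify(9)] by blast
    obtain W0 where W0: "alpha (PPar D1 (PRep T)) W0" "bnames W0 \<inter> SS \<sigma> = {}" "Z1 = nsubst \<sigma> W0"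
      using Z1 by (auto simp: csubst_def)
    obtain A0 B0 where AB: "W0 = PPar A0 B0" "alpha D1 A0" "alpha (PRep T) B0"
      using alpha_PPar[OF W0(1)] D1 tf by auto
    have fB0: "fn B0 = fn T" using alpha_fn[OF AB(3)] tf by simp
    have "dom \<sigma> \<inter> names B0 = {}"
    proof -
      have "names B0 \<subseteq> fn B0 \<union> bnames B0" by (rule names_sub)
      moreover have "bnames B0 \<inter> dom \<sigma> = {}" using W0 AB by auto
      ultimately show ?thesis using fB0 dom D1(5) by auto
    qed
    hence nB: "nsubst \<sigma> B0 = B0" by (rule nsubst_ident)
    define E1 where "E1 = nsubst \<sigma> A0"
    have E1c: "csubst \<sigma> D1 E1" unfolding E1_def using W0 AB by (intro csubst_intro) auto
    have Z1e: "Z1 = PPar E1 B0" using W0 AB nB by (simp add: E1_def)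
    have fE1: "fn E1 \<subseteq> fn T \<union> fnp q \<union> set ms"
      using fn_chain[OF csubst_fn[OF E1c D1(2) cm(1)], of "fn T" "set ms" "fnp p" "fnp q"] D1(3) dom rn l1 tf
      unfolding labok_def by simp
    have wE1: "wf_proc E1" using csubst_wf[OF E1c D1(2) cm(1)] .
    define D where "D = News L (PPar E1 Z2)"
    have "scong (News L (PPar P'' Q'')) (News L (PPar (PPar E1 B0) Z2))"
      using Z1(2) Z1e by (intro scong_News scong.s_par[OF _ Z2(2)]) simp
    also have "scong (News L (PPar (PPar E1 B0) Z2)) (News L (PPar (PPar E1 Z2) B0))"
    proof (rule scong_News)
      have "scong (PPar (PPar E1 B0) Z2) (PPar E1 (PPar B0 Z2))" by (rule scong.s_sym[OF scong.s_par_assoc])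
      also have "scong (PPar E1 (PPar B0 Z2)) (PPar E1 (PPar Z2 B0))"
        by (rule scong.s_par[OF scong.s_refl scong.s_par_comm])
      also have "scong (PPar E1 (PPar Z2 B0)) (PPar (PPar E1 Z2) B0)" by (rule scong.s_par_assoc)
      finally show "scong (PPar (PPar E1 B0) Z2) (PPar (PPar E1 Z2) B0)" .
    qed
    also have "scong (News L (PPar (PPar E1 Z2) B0)) (PPar D B0)"
      unfolding D_def using fB0 D1(5) t_unify(7) tf by (intro scong_News_extr) (auto simp: L_def)
    also have "scong (PPar D B0) (PPar D (PRep T))"
      by (rule scong.s_par[OF scong.s_refl scong.s_alpha[OF alpha.a_sym[OF AB(3)]]])
    finally have sc: "scong (News L (PPar P'' Q'')) (PPar D (PRep T))" .
    define K' where "K' = maxpat T"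
    have K1': "K' \<ge> 1" unfolding K'_def by (rule maxpat_pos)
    have pq: "psz q \<le> K'" "psz p \<le> K'" using l1 l2 tf sQ by (auto simp: labok_def K'_def)
    have sE1: "sz E1 \<le> K' * sz D1" using csubst_sz[OF E1c cm(1) K1'] rp pq by force
    have sZ2: "sz Z2 \<le> K' * sz R2" using csubst_sz[OF Z2(1) cm(2) K1'] rp pq by force
    have lens: "length ms \<le> K'" "length ns \<le> K'" using labok_len[OF l1] labok_len[OF l2] tf sQ
      by (auto simp: K'_def)
    have b1: "sz D1 \<le> (2*K'+3) ^ wsz T" using D1(4) by (simp add: AA_def K'_def)
    have b2: "sz R2 \<le> (2*K'+3) ^ wsz T" using R2(2) sQ by (simp add: BB_def AA_def K'_def)
    have "length ms + length ns + (K' * sz D1 + K' * sz R2 + 1) \<le> (2*K'+3) ^ (wsz T + wsz T + 1)"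
      using ar_unify[OF K1' wsz_pos wsz_pos b1 b2 lens] .
    moreover have "sz D = length ms + length ns + (sz E1 + sz Z2 + 1)" by (simp add: D_def L_def)
    moreover have "(2*K'+3) ^ (wsz T + wsz T + 1) = AA T ^ (2 * wsz T + 1)"
    proof -
      have e1: "2*K'+3 = AA T" by (simp add: AA_def K'_def)
      have e2: "wsz T + wsz T + 1 = 2 * wsz T + 1" by simp
      show ?thesis by (simp only: e1 e2)
    qed
    ultimately have szD: "sz D \<le> AA T ^ (2 * wsz T + 1)" using sE1 sZ2 by linarith
    have h1: "fnp q \<subseteq> fn T \<union> set ns" using l2 fQ by (simp add: labok_def)
    have h2: "fnp p \<subseteq> fn T \<union> set ms" using l1 tf by (simp add: labok_def)
    have "fn D = (fn E1 \<union> fn Z2) - (set ms \<union> set ns)" by (simp add: D_def L_def)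
    also have "\<dots> \<subseteq> fn T" using fE1 fZ2 h1 h2 fQ by blast
    finally have fD: "fn D \<subseteq> fn T \<union> lnames Tau" by simp
    have wD: "wf_proc D" using wE1 wZ2 by (simp add: D_def)
    have "scong (News L (PPar P'' Q'')) (PPar D (PRep T)) \<and> wf_proc D \<and> fn D \<subseteq> fn T \<union> lnames Tau \<and>
     sz D \<le> (case Tau of Tau \<Rightarrow> AA T ^ (2 * wsz T + 1) | Lab ns p \<Rightarrow> AA T ^ wsz T) \<and>
     (case Tau of Tau \<Rightarrow> True | Lab ns p \<Rightarrow> (set ns \<union> bn p) \<inter> fn T = {})"
      using sc szD fD wD by simp
    thus ?thesis unfolding Str_def by blast
  qed
  thus ?case using Gen_part by (simp add: L_def)
next
  case (t_parint_l P P' Q)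
  have wf: "wf_proc P" "wf_proc Q" using t_parint_l.prems by auto
  obtain R where R: "scong P' R" "sz R \<le> BB P" "fn R \<subseteq> fn P \<union> lnames Tau" "wf_proc R"
    using t_parint_l wf by (auto simp: Gen_def)
  have "AA P \<le> AA (PPar P Q)" by (simp add: AA_def)
  hence "BB P \<le> AA (PPar P Q) ^ wsz P" unfolding BB_def by (rule pow_mono1)
  hence "sz R + sz Q + 1 \<le> AA (PPar P Q) ^ (wsz P + wsz Q + 1)"
    using R sz_le_wsz[of Q] wsz_pos[of P] by (intro ar_par) auto
  hence "sz (PPar R Q) \<le> BB (PPar P Q)" by (simp add: BB_def)
  moreover have "scong (PPar P' Q) (PPar R Q)" by (rule scong.s_par[OF R(1) scong.s_refl])
  ultimately have G: "Gen (PPar P Q) Tau (PPar P' Q)" using R wf unfolding Gen_def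
    by (intro exI[of _ "PPar R Q"]) auto
  have "Str T Tau (PPar P' Q)" if tw: "tw T (PPar P Q)" for T
  proof -
    have tP: "tw T P" and aQ: "alpha T Q" using tw by (auto elim: twE)
    obtain D where D: "scong P' (PPar D (PRep T))" "wf_proc D" "fn D \<subseteq> fn T \<union> lnames Tau"
      "sz D \<le> (case Tau of Tau \<Rightarrow> AA T ^ (2 * wsz T + 1) | Lab ns p \<Rightarrow> AA T ^ wsz T)"
      "(case Tau of Tau \<Rightarrow> True | Lab ns p \<Rightarrow> (set ns \<union> bn p) \<inter> fn T = {})"
      using t_parint_l wf tP by (auto simp: Str_def)
    have "scong (PPar P' Q) (PPar (PPar D (PRep T)) Q)" by (rule scong.s_par[OF D(1) scong.s_refl])
    also have "scong (PPar (PPar D (PRep T)) Q) (PPar D (PPar (PRep T) Q))"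
      by (rule scong.s_sym[OF scong.s_par_assoc])
    also have "scong (PPar D (PPar (PRep T) Q)) (PPar D (PRep T))"
      by (rule scong.s_par[OF scong.s_refl absorb[OF aQ]])
    finally show ?thesis using D unfolding Str_def by blast
  qed
  thus ?case using G by blast
next
  case (t_parint_r Q Q' P)
  have wf: "wf_proc P" "wf_proc Q" using t_parint_r.prems by auto
  obtain R where R: "scong Q' R" "sz R \<le> BB Q" "fn R \<subseteq> fn Q \<union> lnames Tau" "wf_proc R"
    using t_parint_r wf by (auto simp: Gen_def)
  have "AA Q \<le> AA (PPar P Q)" by (simp add: AA_def)
  hence "BB Q \<le> AA (PPar P Q) ^ wsz Q" unfolding BB_def by (rule pow_mono1)
  hence "sz P + sz R + 1 \<le> AA (PPar P Q) ^ (wsz P + wsz Q + 1)"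
    using R sz_le_wsz[of P] wsz_pos[of Q] by (intro ar_par') auto
  hence "sz (PPar P R) \<le> BB (PPar P Q)" by (simp add: BB_def)
  moreover have "scong (PPar P Q') (PPar P R)" by (rule scong.s_par[OF scong.s_refl R(1)])
  ultimately have G: "Gen (PPar P Q) Tau (PPar P Q')" using R wf unfolding Gen_def
    by (intro exI[of _ "PPar P R"]) auto
  have "Str T Tau (PPar P Q')" if tw: "tw T (PPar P Q)" for T
  proof -
    have tP: "tw T P" and aQ: "alpha T Q" using tw by (auto elim: twE)
    note tf = tw_facts[OF tP wf(1)]
    have fQ: "fn Q = fn T" using alpha_fn aQ tf by auto
    have sQ: "maxpat Q = maxpat T" "wsz Q = wsz T" using alpha_sz aQ by auto
    have "scong (PPar P Q') (PPar P R)" by (rule scong.s_par[OF scong.s_refl R(1)])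
    also have "scong (PPar P R) (PPar R P)" by (rule scong.s_par_comm)
    also have "scong (PPar R P) (PPar R (PRep T))" using tf by (intro scong.s_par[OF scong.s_refl]) auto
    finally have sc: "scong (PPar P Q') (PPar R (PRep T))" .
    have szR: "sz R \<le> AA T ^ wsz T" using R sQ by (simp add: BB_def AA_def)
    have "AA T ^ wsz T \<le> AA T ^ (2 * wsz T + 1)" by (rule power_increasing) (auto simp: AA_def)
    hence szR': "sz R \<le> AA T ^ (2 * wsz T + 1)" using szR by linarith
    show ?thesis unfolding Str_def
      apply (rule exI[of _ R])
      using sc R fQ szR szR' wf by (auto split: lab.splits)
  qed
  thus ?case using G by blast
next
  case (t_parext_l P ns p P' Q)
  have wf: "wf_proc P" "wf_proc Q" using t_parext_l.prems by auto
  obtain R where R: "scong P' R" "sz R \<le> BB P" "fn R \<subseteq> fn P \<union> lnames (Lab ns p)" "wf_proc R"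
    using t_parext_l wf by (auto simp: Gen_def)
  have "AA P \<le> AA (PPar P Q)" by (simp add: AA_def)
  hence "BB P \<le> AA (PPar P Q) ^ wsz P" unfolding BB_def by (rule pow_mono1)
  hence "sz R + sz Q + 1 \<le> AA (PPar P Q) ^ (wsz P + wsz Q + 1)"
    using R sz_le_wsz[of Q] wsz_pos[of P] by (intro ar_par) auto
  hence "sz (PPar R Q) \<le> BB (PPar P Q)" by (simp add: BB_def)
  moreover have "scong (PPar P' Q) (PPar R Q)" by (rule scong.s_par[OF R(1) scong.s_refl])
  ultimately have G: "Gen (PPar P Q) (Lab ns p) (PPar P' Q)" using R wf unfolding Gen_def
    by (intro exI[of _ "PPar R Q"]) auto
  have "Str T (Lab ns p) (PPar P' Q)" if tw: "tw T (PPar P Q)" for T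
  proof -
    have tP: "tw T P" and aQ: "alpha T Q" using tw by (auto elim: twE)
    obtain D where D: "scong P' (PPar D (PRep T))" "wf_proc D" "fn D \<subseteq> fn T \<union> lnames (Lab ns p)"
      "sz D \<le> (case (Lab ns p) of Tau \<Rightarrow> AA T ^ (2 * wsz T + 1) | Lab ns p \<Rightarrow> AA T ^ wsz T)"
      "(case (Lab ns p) of Tau \<Rightarrow> True | Lab ns p \<Rightarrow> (set ns \<union> bn p) \<inter> fn T = {})"
      using t_parext_l wf tP by (auto simp: Str_def)
    have "scong (PPar P' Q) (PPar (PPar D (PRep T)) Q)" by (rule scong.s_par[OF D(1) scong.s_refl])
    also have "scong (PPar (PPar D (PRep T)) Q) (PPar D (PPar (PRep T) Q))"
      by (rule scong.s_sym[OF scong.s_par_assoc])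
    also have "scong (PPar D (PPar (PRep T) Q)) (PPar D (PRep T))"
      by (rule scong.s_par[OF scong.s_refl absorb[OF aQ]])
    finally show ?thesis using D unfolding Str_def by blast
  qed
  thus ?case using G by blast
next
  case (t_parext_r Q ns p Q' P)
  have wf: "wf_proc P" "wf_proc Q" using t_parext_r.prems by auto
  obtain R where R: "scong Q' R" "sz R \<le> BB Q" "fn R \<subseteq> fn Q \<union> lnames (Lab ns p)" "wf_proc R"
    using t_parext_r wf by (auto simp: Gen_def)
  have "AA Q \<le> AA (PPar P Q)" by (simp add: AA_def)
  hence "BB Q \<le> AA (PPar P Q) ^ wsz Q" unfolding BB_def by (rule pow_mono1)
  hence "sz P + sz R + 1 \<le> AA (PPar P Q) ^ (wsz P + wsz Q + 1)"
    using R sz_le_wsz[of P] wsz_pos[of Q] by (intro ar_par') auto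
  hence "sz (PPar P R) \<le> BB (PPar P Q)" by (simp add: BB_def)
  moreover have "scong (PPar P Q') (PPar P R)" by (rule scong.s_par[OF scong.s_refl R(1)])
  ultimately have G: "Gen (PPar P Q) (Lab ns p) (PPar P Q')" using R wf unfolding Gen_def
    by (intro exI[of _ "PPar P R"]) auto
  have "Str T (Lab ns p) (PPar P Q')" if tw: "tw T (PPar P Q)" for T
  proof -
    have tP: "tw T P" and aQ: "alpha T Q" using tw by (auto elim: twE)
    note tf = tw_facts[OF tP wf(1)]
    have fQ: "fn Q = fn T" using alpha_fn aQ tf by auto
    have sQ: "maxpat Q = maxpat T" "wsz Q = wsz T" using alpha_sz aQ by auto
    have "scong (PPar P Q') (PPar P R)" by (rule scong.s_par[OF scong.s_refl R(1)])
    also have "scong (PPar P R) (PPar R P)" by (rule scong.s_par_comm)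
    also have "scong (PPar R P) (PPar R (PRep T))" using tf by (intro scong.s_par[OF scong.s_refl]) auto
    finally have sc: "scong (PPar P Q') (PPar R (PRep T))" .
    have szR: "sz R \<le> AA T ^ wsz T" using R sQ by (simp add: BB_def AA_def)
    have "AA T ^ wsz T \<le> AA T ^ (2 * wsz T + 1)" by (rule power_increasing) (auto simp: AA_def)
    hence szR': "sz R \<le> AA T ^ (2 * wsz T + 1)" using szR by linarith
    show ?thesis unfolding Str_def
      apply (rule exI[of _ R])
      using sc R fQ szR szR' wf t_parext_r(3) tf by (auto split: lab.splits)
  qed
  thus ?case using G by blast
next
  case (t_rep P \<mu> P')
  have wf: "wf_proc P" using t_rep by simp
  have IH: "\<forall>T. tw T (PPar (PRep P) P) \<longrightarrow> Str T \<mu> P'" using t_rep wf by auto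
  have "tw P (PPar (PRep P) P)" by (intro tw_par tw_rep alpha.a_refl)
  hence "Str P \<mu> P'" using IH by blast
  then obtain D where D: "scong P' (PPar D (PRep P))" "wf_proc D" "fn D \<subseteq> fn P \<union> lnames \<mu>"
      "sz D \<le> (case \<mu> of Tau \<Rightarrow> AA P ^ (2 * wsz P + 1) | Lab ns p \<Rightarrow> AA P ^ wsz P)"
    unfolding Str_def by blast
  have "AA P ^ wsz P \<le> AA P ^ (2 * wsz P + 1)" by (rule power_increasing) (auto simp: AA_def)
  hence szD: "sz D \<le> AA P ^ (2 * wsz P + 1)" using D(4) by (auto split: lab.splits)
  have "sz D + sz P + 2 \<le> AA P ^ (3 * wsz P + 3)"
    using szD sz_le_wsz[of P] wsz_pos[of P] by (intro ar_rep) auto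
  hence "sz (PPar D (PRep P)) \<le> BB (PRep P)" by (simp add: BB_def AA_def)
  hence G: "Gen (PRep P) \<mu> P'" unfolding Gen_def using D wf by (intro exI[of _ "PPar D (PRep P)"]) auto
  have "Str T \<mu> P'" if "tw T (PRep P)" for T
  proof -
    have "alpha T P" using that by (auto elim: twE)
    hence "tw T (PPar (PRep P) P)" by (intro tw_par tw_rep)
    thus ?thesis using IH by blast
  qed
  thus ?case using G by blast
next
  case (t_alpha P Q \<mu> Q' P')
  have wq: "wf_proc Q" using t_alpha alpha_wf by blast
  have IH: "Gen Q \<mu> Q'" "\<forall>T. tw T Q \<longrightarrow> Str T \<mu> Q'" using t_alpha wq by auto
  have sPQ: "scong P' Q'" using t_alpha by (intro scong.s_alpha alpha.a_sym[OF t_alpha(4)])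
  have eq: "BB Q = BB P" "fn Q = fn P" using alpha_sz[OF t_alpha(1)] alpha_fn[OF t_alpha(1)] t_alpha
    by (auto simp: BB_def AA_def)
  have "Gen P \<mu> P'" using IH(1) eq sPQ unfolding Gen_def by (metis scong.s_trans)
  moreover have "Str T \<mu> P'" if "tw T P" for T
  proof -
    have "tw T Q" using tw_alpha that t_alpha by blast
    hence "Str T \<mu> Q'" using IH by blast
    thus ?thesis using sPQ unfolding Str_def by (metis scong.s_trans)
  qed
  ultimately show ?case by blast
qed


lemma card_bn_le: "card (bn p) \<le> psz p"
proof (induct p)
  case (PComp p q)
  have "card (bn (PComp p q)) \<le> card (bn p) + card (bn q)" by (simp add: card_Un_le)
  thus ?case using PComp by simp
qed auto

lemma card_bnames_le: "card (bnames X) \<le> sz X"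
proof (induct X)
  case (PPar P Q)
  have "card (bnames (PPar P Q)) \<le> card (bnames P) + card (bnames Q)" by (simp add: card_Un_le)
  thus ?case using PPar by simp
next
  case (PNew x P)
  have "card (bnames (PNew x P)) \<le> Suc (card (bnames P))" by (simp add: card_insert_if)
  thus ?case using PNew by simp
next
  case (PCase p P)
  have "card (bnames (PCase p P)) \<le> card (bn p) + card (bnames P)" by (simp add: card_Un_le)
  thus ?case using PCase card_bn_le[of p] by simp
qed auto

lemma finite_pats: "finite M \<Longrightarrow> finite {p. psz p \<le> n \<and> pnames p \<subseteq> M}"
proof (induct n)
  case 0
  have "{p. psz p \<le> 0 \<and> pnames p \<subseteq> M} = {}"
  proof (rule equals0I)
    fix p assume "p \<in> {p. psz p \<le> 0 \<and> pnames p \<subseteq> M}"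
    thus False using psz_pos[of p] by simp
  qed
  thus ?case by (metis finite.emptyI)
next
  case (Suc n)
  let ?S = "{p. psz p \<le> n \<and> pnames p \<subseteq> M}"
  have "{p. psz p \<le> Suc n \<and> pnames p \<subseteq> M} \<subseteq>
    PBind ` M \<union> PVar ` M \<union> PProt ` M \<union> (\<lambda>(a,b). PComp a b) ` (?S \<times> ?S)"
  proof
    fix p assume "p \<in> {p. psz p \<le> Suc n \<and> pnames p \<subseteq> M}"
    thus "p \<in> PBind ` M \<union> PVar ` M \<union> PProt ` M \<union> (\<lambda>(a,b). PComp a b) ` (?S \<times> ?S)"
      by (cases p) auto
  qed
  moreover have "finite (PBind ` M \<union> PVar ` M \<union> PProt ` M \<union> (\<lambda>(a,b). PComp a b) ` (?S \<times> ?S))"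
    using Suc by auto
  ultimately show ?case by (rule finite_subset)
qed

lemma finite_procs: "finite M \<Longrightarrow> finite {R. sz R \<le> n \<and> names R \<subseteq> M}"
proof (induct n)
  case 0
  have "{R. sz R \<le> 0 \<and> names R \<subseteq> M} = {}"
  proof (rule equals0I)
    fix R assume "R \<in> {R. sz R \<le> 0 \<and> names R \<subseteq> M}"
    thus False using sz_pos[of R] by simp
  qed
  thus ?case by (metis finite.emptyI)
next
  case (Suc n)
  let ?S = "{R. sz R \<le> n \<and> names R \<subseteq> M}"
  let ?Q = "{p. psz p \<le> Suc n \<and> pnames p \<subseteq> M}"
  have "{R. sz R \<le> Suc n \<and> names R \<subseteq> M} \<subseteq>
    {PZero} \<union> (\<lambda>(a,b). PPar a b) ` (?S \<times> ?S) \<union> PRep ` ?S \<union> (\<lambda>(x,P). PNew x P) ` (M \<times> ?S)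
      \<union> (\<lambda>(p,P). PCase p P) ` (?Q \<times> ?S)"
  proof
    fix R assume "R \<in> {R. sz R \<le> Suc n \<and> names R \<subseteq> M}"
    thus "R \<in> {PZero} \<union> (\<lambda>(a,b). PPar a b) ` (?S \<times> ?S) \<union> PRep ` ?S \<union> (\<lambda>(x,P). PNew x P) ` (M \<times> ?S)
      \<union> (\<lambda>(p,P). PCase p P) ` (?Q \<times> ?S)"
      by (cases R) (auto simp: image_iff)
  qed
  moreover have "finite ({PZero} \<union> (\<lambda>(a,b). PPar a b) ` (?S \<times> ?S) \<union> PRep ` ?S \<union> (\<lambda>(x,P). PNew x P) ` (M \<times> ?S)
      \<union> (\<lambda>(p,P). PCase p P) ` (?Q \<times> ?S))"
    using Suc finite_pats[OF Suc(2), of "Suc n"] by auto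
  ultimately show ?case by (rule finite_subset)
qed

lemma finite_lnames[simp]: "finite (lnames \<mu>)" by (cases \<mu>) auto

lemma canon:
  assumes "finite N" "Pool \<inter> N = {}" "finite Pool" "card Pool \<ge> b"
    "sz R \<le> b" "fn R \<subseteq> N" "wf_proc R"
  shows "\<exists>R'. alpha R R' \<and> sz R' \<le> b \<and> names R' \<subseteq> N \<union> Pool"
proof -
  obtain R0 where R0: "alpha R R0" "bnames R0 \<inter> (N \<union> Pool) = {}"
    using rename_fresh[of "N \<union> Pool" R] assms by auto
  have fn0: "fn R0 = fn R" using alpha_fn R0 assms by auto
  have sz0: "sz R0 = sz R" using alpha_sz R0 by auto
  have wf0: "wf_proc R0" using alpha_wf R0 assms by auto
  define ds where "ds = sorted_list_of_set (bnames R0)"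
  have ds: "distinct ds" "set ds = bnames R0" by (auto simp: ds_def)
  have "length ds = card (bnames R0)" using ds by (metis distinct_card)
  also have "\<dots> \<le> sz R0" by (rule card_bnames_le)
  finally have "length ds \<le> card Pool" using sz0 assms by linarith
  define cs where "cs = take (length ds) (sorted_list_of_set Pool)"
  have cs: "set cs \<subseteq> Pool" "distinct cs" "length cs = length ds"
  proof -
    show "set cs \<subseteq> Pool" using assms(3) by (auto simp: cs_def dest: in_set_takeD)
    show "distinct cs" by (simp add: cs_def)
    show "length cs = length ds" using \<open>length ds \<le> card Pool\<close> assms(3) by (simp add: cs_def)
  qed
  define xs where "xs = zip ds cs"
  have m: "map fst xs = ds" "map snd xs = cs" using cs by (auto simp: xs_def)
  have f: "fst ` set xs = bnames R0" "snd ` set xs = set cs" using ds by (metis list.set_map m)+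
  have d: "distinct (map fst xs @ map snd xs)" using m ds cs R0 by auto
  define g where "g = swaps xs"
  have fixg: "\<forall>z\<in>fn R0. g z = z"
  proof
    fix z assume "z \<in> fn R0"
    hence "z \<in> N" using fn0 assms by auto
    hence "z \<notin> fst ` set xs" "z \<notin> snd ` set xs" using f R0 cs assms by auto
    thus "g z = z" unfolding g_def by (rule swaps_other)
  qed
  have a: "alpha R0 (mapP g R0)" using GL[OF _ wf0 fixg] by (simp add: g_def)
  have "names (mapP g R0) = g ` names R0" by simp
  also have "\<dots> \<subseteq> g ` (fn R0 \<union> bnames R0)" using names_sub by blast
  also have "\<dots> = fn R0 \<union> g ` bnames R0" using fixg by (auto simp: image_Un)
  also have "g ` bnames R0 = set cs" using swaps_image_fst[OF d] f by (simp add: g_def)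
  finally have "names (mapP g R0) \<subseteq> N \<union> Pool" using fn0 assms cs by auto
  moreover have "alpha R (mapP g R0)" by (rule alpha.a_trans[OF R0(1) a])
  moreover have "sz (mapP g R0) \<le> b" using sz0 assms by simp
  ultimately show ?thesis by blast
qed

lemma scong_equiv_class: "scong X Y \<Longrightarrow> scong_rel `` {X} = scong_rel `` {Y}"
  by (auto simp: scong_rel_def intro: scong.s_trans scong.s_sym)

theorem proposition3p7:
  fixes P :: proc and \<mu> :: lab
  assumes "wf_proc P"
  shows "finite ({P'. ltr P \<mu> P'} // scong_rel)"
proof -
  define N where "N = fn P \<union> lnames \<mu>"
  define b where "b = BB P"
  define M where "M = Suc (Max (insert 0 N))"
  define Pool where "Pool = {M..<M+b}"
  have fN: "finite N" by (simp add: N_def)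
  have PN: "Pool \<inter> N = {}"
  proof -
    have "\<forall>z\<in>N. z < M" using fN by (auto simp: M_def less_Suc_eq_le)
    thus ?thesis by (auto simp: Pool_def)
  qed
  have fP: "finite Pool" "card Pool \<ge> b" by (auto simp: Pool_def)
  define Fin where "Fin = {R. sz R \<le> b \<and> names R \<subseteq> N \<union> Pool}"
  have fFin: "finite Fin" unfolding Fin_def using finite_procs fN fP by auto
  have "{P'. ltr P \<mu> P'} // scong_rel \<subseteq> (\<lambda>R. scong_rel `` {R}) ` Fin"
  proof
    fix C assume "C \<in> {P'. ltr P \<mu> P'} // scong_rel"
    then obtain X where X: "ltr P \<mu> X" "C = scong_rel `` {X}" by (auto simp: quotient_def)
    have "Gen P \<mu> X" using main X assms by blast
    then obtain R where R: "scong X R" "sz R \<le> b" "fn R \<subseteq> N" "wf_proc R"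
      by (auto simp: Gen_def N_def b_def)
    obtain R' where R': "alpha R R'" "sz R' \<le> b" "names R' \<subseteq> N \<union> Pool"
      using canon[OF fN PN fP R(2-4)] by blast
    have "scong X R'" using R R' by (meson scong.s_alpha scong.s_trans)
    hence "C = scong_rel `` {R'}" using X scong_equiv_class by auto
    moreover have "R' \<in> Fin" using R' by (simp add: Fin_def)
    ultimately show "C \<in> (\<lambda>R. scong_rel `` {R}) ` Fin" by blast
  qed
  thus ?thesis using fFin finite_subset by blast
qed


end
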